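(* Fix $M>0$ and $0<\theta_1<\theta_2<2s-1$. There exists a constant $c_2>0$ such that if $$\limsup_{n\to\infty}\sup_{\theta\in[\theta_1,\theta_2]}\Big\{\Delta_n(\theta)\Big(\frac{n}{\sqrt{\log\log n}}\Big)^{\frac{4s}{4s+\theta+1}}\Big\}\le c_2,$$ then $$\lim_{n\to\infty}\inf_{T\in\mathcal T_n}\Big[\mathbb E_{P_0}T+\sup_{\theta\in[\theta_1,\theta_2]}\beta(T;\Delta_n(\theta),\theta,M)\Big]=1,$$ where $\mathcal T_n$ is the collection of all measurable test functions $T:\mathcal X^n\to[0,1]$ of $X_1,\dots,X_n$.
   Context: Standing setup. $(\mathcal X,\mathcal B)$ is a measurable space and $P_0$ a known probability measure on it. $K$ is a symmetric, positive semidefinite, square-integrable kernel, degenerate under $P_0$, with Mercer decomposition $K(x,x')=\sum_{k\ge1}\lambda_k\varphi_k(x)\varphi_k(x')$, infinitely many eigenvalues $\lambda_1>\lambda_2>\cdots>0$, $\{\varphi_k\}$ an orthonormal basis of the $P_0$-mean-zero functions in $L_2(P_0)$, $0<\liminf_k k^{2s}\lambda_k\le\limsup_k k^{2s}\lambda_k<\infty$ for some $s>1/2$, and $\sup_k\|\varphi_k\|_\infty<\infty$. $\mathcal H(K)$ is the RKHS of $K$, $\|f\|_K^2=\sum_k\lambda_k^{-1}\langle f,\varphi_k\rangle_{L_2(P_0)}^2$. $\mathcal F(\theta;M)$ ($\theta>0$) is the set of $f\in L_2(P_0)$ such that for every $R>0$ there is $f_R\in\mathcal H(K)$ with $\|f_R\|_K\le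 R$ and $\|f-f_R\|_{L_2(P_0)}\le MR^{-1/\theta}$. $\mathcal P(\Delta,\theta,M)$ is the set of probability measures $P\ll P_0$ with $u=dP/dP_0-1\in\mathcal F(\theta;M)$ and $\|u\|^2_{L_2(P_0)}\ge\Delta$. Type II error: $\beta(T;\Delta,\theta,M)=\sup_{P\in\mathcal P(\Delta,\theta,M)}\mathbb E_P[1-T(X_1,\dots,X_n)]$ with $X_i$ i.i.d. $P$; $\mathbb E_{P_0}T$ is the type I error. *)

theory Defs
  imports "HOL-Probability.Probability"
begin

definition L2 :: "'a measure \<Rightarrow> ('a \<Rightarrow> real) set" where
  "L2 P0 = {f. f \<in> borel_measurable P0 \<and> integrable P0 (\<lambda>x. (f x)^2)}"

definition L2norm :: "'a measure \<Rightarrow> ('a \<Rightarrow> real) \<Rightarrow> real" where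
  "L2norm P0 f = sqrt (\<integral>x. (f x)^2 \<partial>P0)"

definition coef :: "'a measure \<Rightarrow> (nat \<Rightarrow> 'a \<Rightarrow> real) \<Rightarrow> ('a \<Rightarrow> real) \<Rightarrow> nat \<Rightarrow> real" where
  "coef P0 \<phi> f k = (\<integral>x. f x * \<phi> k x \<partial>P0)"

text \<open>Membership in the RKHS H(K) (as elements of L2(P0)): f lies in the closed span
  of the eigenfunctions (i.e. is P0-mean-zero) and has finite RKHS norm.\<close>
definition in_RKHS :: "'a measure \<Rightarrow> (nat \<Rightarrow> real) \<Rightarrow> (nat \<Rightarrow> 'a \<Rightarrow> real) \<Rightarrow> ('a \<Rightarrow> real) \<Rightarrow> bool" where
  "in_RKHS P0 lam \<phi> f \<longleftrightarrow> f \<in> L2 P0 \<and> (\<integral>x. f x \<partial>P0) = 0 \<and>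
      summable (\<lambda>k. (coef P0 \<phi> f k)^2 / lam k)"

definition RKHS_norm :: "'a measure \<Rightarrow> (nat \<Rightarrow> real) \<Rightarrow> (nat \<Rightarrow> 'a \<Rightarrow> real) \<Rightarrow> ('a \<Rightarrow> real) \<Rightarrow> real" where
  "RKHS_norm P0 lam \<phi> f = sqrt (\<Sum>k. (coef P0 \<phi> f k)^2 / lam k)"

definition Fclass :: "'a measure \<Rightarrow> (nat \<Rightarrow> real) \<Rightarrow> (nat \<Rightarrow> 'a \<Rightarrow> real) \<Rightarrow> real \<Rightarrow> real \<Rightarrow> ('a \<Rightarrow> real) set" where
  "Fclass P0 lam \<phi> \<theta> Mc = {f \<in> L2 P0. \<forall>R>0. \<exists>fR. in_RKHS P0 lam \<phi> fR \<and>
       RKHS_norm P0 lam \<phi> fR \<le> R \<and> L2norm P0 (\<lambda>x. f x - fR x) \<le> Mc * R powr (-1/\<theta>)}"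

definition density_dev :: "'a measure \<Rightarrow> 'a measure \<Rightarrow> 'a \<Rightarrow> real" where
  "density_dev P0 P = (\<lambda>x. enn2real (RN_deriv P0 P x) - 1)"

definition Palt :: "'a measure \<Rightarrow> (nat \<Rightarrow> real) \<Rightarrow> (nat \<Rightarrow> 'a \<Rightarrow> real) \<Rightarrow> real \<Rightarrow> real \<Rightarrow> real \<Rightarrow> 'a measure set" where
  "Palt P0 lam \<phi> \<Delta> \<theta> Mc = {P. sets P = sets P0 \<and> prob_space P \<and> absolutely_continuous P0 P \<and>
       density_dev P0 P \<in> Fclass P0 lam \<phi> \<theta> Mc \<and> (L2norm P0 (density_dev P0 P))^2 \<ge> \<Delta>}"

definition tests :: "'a measure \<Rightarrow> nat \<Rightarrow> ((nat \<Rightarrow> 'a) \<Rightarrow> real) set" where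
  "tests P0 n = {T. T \<in> borel_measurable (PiM {..<n} (\<lambda>_. P0)) \<and>
       (\<forall>x\<in>space (PiM {..<n} (\<lambda>_. P0)). 0 \<le> T x \<and> T x \<le> 1)}"

text \<open>Type II error; the supremum over an empty alternative class is taken to be 0.\<close>
definition type2 :: "'a measure \<Rightarrow> (nat \<Rightarrow> real) \<Rightarrow> (nat \<Rightarrow> 'a \<Rightarrow> real) \<Rightarrow> nat \<Rightarrow>
     ((nat \<Rightarrow> 'a) \<Rightarrow> real) \<Rightarrow> real \<Rightarrow> real \<Rightarrow> real \<Rightarrow> real" where
  "type2 P0 lam \<phi> n T \<Delta> \<theta> Mc = Sup (insert 0
      ((\<lambda>P. \<integral>x. 1 - T x \<partial>(PiM {..<n} (\<lambda>_. P))) ` Palt P0 lam \<phi> \<Delta> \<theta> Mc))"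

end

theory Submission
  imports Defs "HOL-Real_Asymp.Real_Asymp"
begin

lemma pim_density:
  assumes M: "prob_space M" and g: "g \<in> borel_measurable M" "\<And>x. 0 \<le> g x"
    and Pg: "prob_space (density M (\<lambda>x. ennreal (g x)))" and I: "finite I"
  shows "PiM I (\<lambda>_. density M (\<lambda>x. ennreal (g x))) =
         density (PiM I (\<lambda>_. M)) (\<lambda>x. ennreal (\<Prod>i\<in>I. g (x i)))"
proof -
  interpret D: product_sigma_finite "\<lambda>_. density M (\<lambda>x. ennreal (g x))"
    by (simp add: product_sigma_finite_def prob_space_imp_sigma_finite Pg)
  interpret P: product_sigma_finite "\<lambda>_. M"
    by (simp add: product_sigma_finite_def prob_space_imp_sigma_finite M)
  have sets_eq: "sets (PiM I (\<lambda>_. density M (\<lambda>x. ennreal (g x)))) = sets (PiM I (\<lambda>_. M))"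
    by (intro sets_PiM_cong) auto
  show ?thesis
  proof (rule D.PiM_eqI[symmetric])
    show "finite I" by fact
    show "sets (density (PiM I (\<lambda>_. M)) (\<lambda>x. ennreal (\<Prod>i\<in>I. g (x i)))) = sets (PiM I (\<lambda>_. density M (\<lambda>x. ennreal (g x))))"
      using sets_eq by simp
    fix A assume A: "\<And>i. i \<in> I \<Longrightarrow> A i \<in> sets (density M (\<lambda>x. ennreal (g x)))"
    then have A': "\<And>i. i\<in>I \<Longrightarrow> A i \<in> sets M" by simp
    have PA: "PiE I A \<in> sets (PiM I (\<lambda>_. M))"
      using A' I by (intro sets_PiM_I_finite) auto
    have gm: "(\<lambda>x. ennreal (\<Prod>i\<in>I. g (x i))) \<in> borel_measurable (PiM I (\<lambda>_. M))"
      using g(1) by measurable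
    have "emeasure (density (PiM I (\<lambda>_. M)) (\<lambda>x. ennreal (\<Prod>i\<in>I. g (x i)))) (PiE I A)
        = (\<integral>\<^sup>+ x. ennreal (\<Prod>i\<in>I. g (x i)) * indicator (PiE I A) x \<partial>PiM I (\<lambda>_. M))"
      by (rule emeasure_density[OF gm PA])
    also have "\<dots> = (\<integral>\<^sup>+ x. (\<Prod>i\<in>I. ennreal (g (x i)) * indicator (A i) (x i)) \<partial>PiM I (\<lambda>_. M))"
    proof (intro nn_integral_cong)
      fix x assume x: "x \<in> space (PiM I (\<lambda>_. M))"
      have "indicator (PiE I A) x = (\<Prod>i\<in>I. indicator (A i) (x i) :: ennreal)"
        using x I by (auto simp: indicator_def space_PiM PiE_def Pi_def extensional_def)
      then show "ennreal (\<Prod>i\<in>I. g (x i)) * indicator (PiE I A) x = (\<Prod>i\<in>I. ennreal (g (x i)) * indicator (A i) (x i))"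
        using g(2) by (simp add: prod.distrib prod_ennreal)
    qed
    also have "\<dots> = (\<Prod>i\<in>I. \<integral>\<^sup>+ y. ennreal (g y) * indicator (A i) y \<partial>M)"
      using I A' g(1) by (intro P.product_nn_integral_prod) auto
    also have "\<dots> = (\<Prod>i\<in>I. emeasure (density M (\<lambda>x. ennreal (g x))) (A i))"
      using A' g(1) by (intro prod.cong refl) (simp add: emeasure_density)
    finally show "emeasure (density (PiM I (\<lambda>_. M)) (\<lambda>x. ennreal (\<Prod>i\<in>I. g (x i)))) (PiE I A) = (\<Prod>i\<in>I. emeasure (density M (\<lambda>x. ennreal (g x))) (A i))" .
  qed
qed

lemma bdd_integrable:
  fixes f :: "'a \<Rightarrow> real"
  assumes "finite_measure Q" "f \<in> borel_measurable Q" "\<And>x. x \<in> space Q \<Longrightarrow> \<bar>f x\<bar> \<le> B"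
  shows "integrable Q f"
  using assms by (intro finite_measure.integrable_const_bound[where B=B]) (auto intro!: AE_I2)

lemma sq_int_le:
  fixes h :: "'a \<Rightarrow> real"
  assumes Q: "prob_space Q" and h: "integrable Q h" "integrable Q (\<lambda>x. (h x)^2)"
  shows "(\<integral>x. \<bar>h x\<bar> \<partial>Q) \<le> sqrt (\<integral>x. (h x)^2 \<partial>Q)"
proof -
  interpret prob_space Q by fact
  define c where "c = (\<integral>x. \<bar>h x\<bar> \<partial>Q)"
  have ia: "integrable Q (\<lambda>x. \<bar>h x\<bar>)" using h by auto
  have "0 \<le> (\<integral>x. (\<bar>h x\<bar> - c)^2 \<partial>Q)" by simp
  also have "(\<lambda>x. (\<bar>h x\<bar> - c)^2) = (\<lambda>x. (h x)^2 - 2 * c * \<bar>h x\<bar> + c^2)"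
    by (auto simp: power2_eq_square algebra_simps)
  also have "(\<integral>x. (h x)^2 - 2 * c * \<bar>h x\<bar> + c^2 \<partial>Q) = (\<integral>x. (h x)^2 \<partial>Q) - 2 * c * c + c^2"
    using h ia by (simp add: c_def prob_space)
  finally have "c^2 \<le> (\<integral>x. (h x)^2 \<partial>Q)" by (simp add: power2_eq_square)
  then show ?thesis unfolding c_def by (rule real_le_rsqrt)
qed

lemma prob_density1:
  assumes M: "prob_space M" and u: "u \<in> borel_measurable M" "\<And>x. \<bar>u x\<bar> \<le> 1" "(\<integral>x. u x \<partial>M) = 0"
  shows "prob_space (density M (\<lambda>x. ennreal (1 + u x)))"
proof -
  interpret prob_space M by fact
  have iu: "integrable M u" using u by (intro bdd_integrable[where B=1]) auto
  have "emeasure (density M (\<lambda>x. ennreal (1 + u x))) (space M) = (\<integral>\<^sup>+ x. ennreal (1 + u x) \<partial>M)"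
    using u by (subst emeasure_density) (auto intro!: nn_integral_cong)
  also have "\<dots> = ennreal (\<integral>x. 1 + u x \<partial>M)"
    using iu u(2) by (intro nn_integral_eq_integral AE_I2) (auto simp: abs_le_iff, smt (verit) u(2) abs_le_iff)
  also have "\<dots> = 1" using iu u(3) by (simp add: prob_space)
  finally show ?thesis by (intro prob_spaceI) simp
qed

lemma prod_abs_bound:
  fixes f :: "nat \<Rightarrow> real"
  assumes "\<And>i. i \<in> I \<Longrightarrow> \<bar>f i\<bar> \<le> 2"
  shows "\<bar>\<Prod>i\<in>I. f i\<bar> \<le> 2 ^ card I"
proof -
  have "\<bar>\<Prod>i\<in>I. f i\<bar> = (\<Prod>i\<in>I. \<bar>f i\<bar>)" by (simp add: abs_prod)
  also have "\<dots> \<le> (\<Prod>i\<in>I. 2)" using assms by (intro prod_mono) auto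
  finally show ?thesis by simp
qed

lemma chi2_lb:
  fixes M :: "'a measure" and u :: "'s \<Rightarrow> 'a \<Rightarrow> real" and w :: "'s \<Rightarrow> real"
    and T :: "(nat \<Rightarrow> 'a) \<Rightarrow> real" and n :: nat
  assumes M: "prob_space M" and S: "finite S" and w: "\<And>s. s\<in>S \<Longrightarrow> 0 \<le> w s" "sum w S = 1"
    and um: "\<And>s. s\<in>S \<Longrightarrow> u s \<in> borel_measurable M"
    and ub: "\<And>s x. s\<in>S \<Longrightarrow> \<bar>u s x\<bar> \<le> 1"
    and u0: "\<And>s. s\<in>S \<Longrightarrow> (\<integral>x. u s x \<partial>M) = 0"
    and Tm: "T \<in> borel_measurable (PiM {..<n} (\<lambda>_. M))"
    and Tb: "\<And>x. x \<in> space (PiM {..<n} (\<lambda>_. M)) \<Longrightarrow> 0 \<le> T x \<and> T x \<le> 1"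
  shows "1 - sqrt ((\<Sum>s\<in>S. \<Sum>t\<in>S. w s * w t * (1 + (\<integral>x. u s x * u t x \<partial>M))^n) - 1)
         \<le> (\<integral>x. T x \<partial>PiM {..<n} (\<lambda>_. M)) +
            (\<Sum>s\<in>S. w s * (\<integral>x. 1 - T x \<partial>PiM {..<n} (\<lambda>_. density M (\<lambda>x. ennreal (1 + u s x)))))"
proof -
  define I where "I = {..<n}"
  define Q where "Q = PiM I (\<lambda>_. M)"
  interpret M: prob_space M by fact
  interpret Q: prob_space Q unfolding Q_def by (intro prob_space_PiM) (simp add: M)
  interpret P: product_sigma_finite "\<lambda>_. M"
    by (simp add: product_sigma_finite_def prob_space_imp_sigma_finite M)
  have fQ: "finite_measure Q" by (simp add: Q.finite_measure_axioms)
  have fI: "finite I" by (simp add: I_def)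
  define G where "G s x = (\<Prod>i\<in>I. 1 + u s (x i))" for s x
  define L where "L x = (\<Sum>s\<in>S. w s * G s x)" for x
  have Tm': "T \<in> borel_measurable Q" using Tm by (simp add: Q_def I_def)
  have Tb': "\<And>x. x \<in> space Q \<Longrightarrow> 0 \<le> T x \<and> T x \<le> 1" using Tb by (simp add: Q_def I_def)
  have Gm: "G s \<in> borel_measurable Q" if "s \<in> S" for s
    using um[OF that] unfolding G_def Q_def by measurable
  have Gb: "\<bar>G s x\<bar> \<le> 2 ^ n" if "s \<in> S" for s x
  proof -
    have h: "\<bar>1 + u s y\<bar> \<le> 2" for y using ub[OF that, of y] by (simp add: abs_le_iff)
    have "\<bar>G s x\<bar> \<le> 2 ^ card I" unfolding G_def
      using h by (intro prod_abs_bound) auto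
    then show ?thesis by (simp add: I_def)
  qed
  have Gnn: "0 \<le> G s x" if "s \<in> S" for s x
    proof -
    have h: "0 \<le> 1 + u s y" for y using ub[OF that, of y] by (simp add: abs_le_iff)
    show ?thesis unfolding G_def using h by (intro prod_nonneg) auto
  qed
  have Lm: "L \<in> borel_measurable Q" unfolding L_def using Gm by measurable
  have Lb: "\<bar>L x\<bar> \<le> 2 ^ n" for x
  proof -
    have "\<bar>L x\<bar> \<le> (\<Sum>s\<in>S. \<bar>w s * G s x\<bar>)" unfolding L_def by (rule sum_abs)
    also have "\<dots> \<le> (\<Sum>s\<in>S. w s * 2 ^ n)"
      using w(1) Gb by (intro sum_mono) (simp add: abs_mult mult_left_mono)
    also have "\<dots> = 2 ^ n" using w(2) by (simp add: sum_distrib_right[symmetric])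
    finally show ?thesis .
  qed
  have iu: "integrable M (u s)" if "s \<in> S" for s
    using um[OF that] ub[OF that] by (intro bdd_integrable[where B=1]) (auto simp: M.finite_measure_axioms)
  have iuu: "integrable M (\<lambda>x. u s x * u t x)" if "s \<in> S" "t \<in> S" for s t
    using um[OF that(1)] um[OF that(2)] ub[OF that(1)] ub[OF that(2)]
    by (intro bdd_integrable[where B=1]) (auto simp: M.finite_measure_axioms abs_mult intro: mult_le_one)
  have int1: "(\<integral>x. 1 + u s x \<partial>M) = 1" if "s \<in> S" for s
    using iu[OF that] u0[OF that] by (simp add: M.prob_space)
  have int2: "(\<integral>x. (1 + u s x) * (1 + u t x) \<partial>M) = 1 + (\<integral>x. u s x * u t x \<partial>M)" if "s \<in> S" "t \<in> S" for s t
  proof -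
    have "(\<lambda>x. (1 + u s x) * (1 + u t x)) = (\<lambda>x. 1 + u s x + u t x + u s x * u t x)"
      by (auto simp: algebra_simps)
    then show ?thesis using iu[OF that(1)] iu[OF that(2)] iuu[OF that] u0[OF that(1)] u0[OF that(2)]
      by (simp add: M.prob_space)
  qed
  have intG: "(\<integral>x. G s x \<partial>Q) = 1" if "s \<in> S" for s
  proof -
    have "(\<integral>x. G s x \<partial>Q) = (\<Prod>i\<in>I. (\<integral>x. 1 + u s x \<partial>M))"
      unfolding G_def Q_def using fI iu[OF that]
      by (intro P.product_integral_prod) auto
    then show ?thesis using int1[OF that] by simp
  qed
  have intGG: "(\<integral>x. G s x * G t x \<partial>Q) = (1 + (\<integral>x. u s x * u t x \<partial>M))^n" if "s \<in> S" "t \<in> S" for s t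
  proof -
    have "(\<integral>x. G s x * G t x \<partial>Q) = (\<integral>x. (\<Prod>i\<in>I. (1 + u s (x i)) * (1 + u t (x i))) \<partial>Q)"
      unfolding G_def by (simp add: prod.distrib)
    also have "\<dots> = (\<Prod>i\<in>I. (\<integral>x. (1 + u s x) * (1 + u t x) \<partial>M))"
      unfolding Q_def using fI iu[OF that(1)] iu[OF that(2)] iuu[OF that]
      by (intro P.product_integral_prod) (auto simp: algebra_simps)
    finally show ?thesis using int2[OF that] by (simp add: I_def)
  qed
  have iG: "integrable Q (G s)" if "s \<in> S" for s
    using Gm[OF that] Gb[OF that] fQ by (intro bdd_integrable[where B="2^n"]) auto
  have iGG: "integrable Q (\<lambda>x. G s x * G t x)" if "s \<in> S" "t \<in> S" for s t
    using Gm[OF that(1)] Gm[OF that(2)] Gb[OF that(1)] Gb[OF that(2)] fQ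
    by (intro bdd_integrable[where B="2^n * 2^n"]) (auto simp: abs_mult intro: mult_mono)
  have dens: "(\<integral>x. 1 - T x \<partial>PiM {..<n} (\<lambda>_. density M (\<lambda>x. ennreal (1 + u s x)))) = (\<integral>x. G s x * (1 - T x) \<partial>Q)"
    if "s \<in> S" for s
  proof -
    have pd: "prob_space (density M (\<lambda>x. ennreal (1 + u s x)))"
      using um[OF that] ub[OF that] u0[OF that] by (intro prob_density1 M) auto
    have "PiM {..<n} (\<lambda>_. density M (\<lambda>x. ennreal (1 + u s x))) = density Q (\<lambda>x. ennreal (G s x))"
      unfolding Q_def G_def I_def using um[OF that] ub[OF that] pd
      by (intro pim_density M) (auto, smt (verit))
    then show ?thesis
      using Tm' Gm[OF that] Gnn[OF that] by (simp add: integral_density)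
  qed
  have iGT: "integrable Q (\<lambda>x. G s x * (1 - T x))" if "s \<in> S" for s
  proof (rule bdd_integrable[where B="2^n"])
    show "finite_measure Q" by (rule fQ)
    show "(\<lambda>x. G s x * (1 - T x)) \<in> borel_measurable Q" using Gm[OF that] Tm' by measurable
    fix x assume x: "x \<in> space Q"
    have "\<bar>1 - T x\<bar> \<le> 1" using Tb'[OF x] by auto
    then have "\<bar>G s x\<bar> * \<bar>1 - T x\<bar> \<le> 2^n * 1" using Gb[OF that, of x] by (intro mult_mono) auto
    then show "\<bar>G s x * (1 - T x)\<bar> \<le> 2^n" by (simp add: abs_mult)
  qed
  have iT: "integrable Q T" using Tm' Tb' fQ by (intro bdd_integrable[where B=1]) auto
  have iL: "integrable Q L" using Lm Lb fQ by (intro bdd_integrable[where B="2^n"]) auto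
  have iL2: "integrable Q (\<lambda>x. (L x - 1)^2)"
  proof (rule bdd_integrable[where B="(2^n+1)^2"])
    show "finite_measure Q" by (rule fQ)
    show "(\<lambda>x. (L x - 1)^2) \<in> borel_measurable Q" using Lm by measurable
    fix x
    have "\<bar>L x - 1\<bar> \<le> 2^n + 1" using Lb[of x] by linarith
    then have "\<bar>L x - 1\<bar>^2 \<le> (2^n+1)^2" by (intro power_mono) auto
    then show "\<bar>(L x - 1)^2\<bar> \<le> (2^n+1)^2" by simp
  qed
  have intL: "(\<integral>x. L x \<partial>Q) = 1"
  proof -
    have "(\<integral>x. L x \<partial>Q) = (\<Sum>s\<in>S. w s * (\<integral>x. G s x \<partial>Q))"
      unfolding L_def using iG by (simp add: integral_sum)
    also have "\<dots> = 1" using intG w(2) by simp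
    finally show ?thesis .
  qed
  have sumdens: "(\<Sum>s\<in>S. w s * (\<integral>x. 1 - T x \<partial>PiM {..<n} (\<lambda>_. density M (\<lambda>x. ennreal (1 + u s x)))))
       = (\<integral>x. L x * (1 - T x) \<partial>Q)"
  proof -
    have "(\<Sum>s\<in>S. w s * (\<integral>x. 1 - T x \<partial>PiM {..<n} (\<lambda>_. density M (\<lambda>x. ennreal (1 + u s x)))))
        = (\<Sum>s\<in>S. (\<integral>x. w s * (G s x * (1 - T x)) \<partial>Q))"
      using dens by (intro sum.cong) auto
    also have "\<dots> = (\<integral>x. (\<Sum>s\<in>S. w s * (G s x * (1 - T x))) \<partial>Q)"
      using iGT by (simp add: integral_sum)
    also have "\<dots> = (\<integral>x. L x * (1 - T x) \<partial>Q)"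
      unfolding L_def by (simp add: sum_distrib_right mult.assoc)
    finally show ?thesis .
  qed
  have iLT: "integrable Q (\<lambda>x. L x * (1 - T x))"
    unfolding L_def using iGT by (simp add: sum_distrib_right mult.assoc)
  have iLm1: "integrable Q (\<lambda>x. L x - 1)" using iL by simp
  have intL2: "(\<integral>x. (L x - 1)^2 \<partial>Q) = (\<Sum>s\<in>S. \<Sum>t\<in>S. w s * w t * (1 + (\<integral>x. u s x * u t x \<partial>M))^n) - 1"
  proof -
    have e1: "(\<lambda>x. (L x - 1)^2) = (\<lambda>x. (\<Sum>s\<in>S. \<Sum>t\<in>S. w s * w t * (G s x * G t x)) - 2 * L x + 1)"
      by (auto simp: L_def power2_eq_square algebra_simps sum_product sum_distrib_left)
    have iSS: "integrable Q (\<lambda>x. \<Sum>s\<in>S. \<Sum>t\<in>S. w s * w t * (G s x * G t x))"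
      using iGG by auto
    have "(\<integral>x. (L x - 1)^2 \<partial>Q) = (\<integral>x. (\<Sum>s\<in>S. \<Sum>t\<in>S. w s * w t * (G s x * G t x)) \<partial>Q) - 2 * 1 + 1"
      unfolding e1 using iSS iL intL by (simp add: Q.prob_space)
    also have "(\<integral>x. (\<Sum>s\<in>S. \<Sum>t\<in>S. w s * w t * (G s x * G t x)) \<partial>Q)
        = (\<Sum>s\<in>S. \<Sum>t\<in>S. w s * w t * (\<integral>x. G s x * G t x \<partial>Q))"
      using iGG by (simp add: integral_sum)
    also have "\<dots> = (\<Sum>s\<in>S. \<Sum>t\<in>S. w s * w t * (1 + (\<integral>x. u s x * u t x \<partial>M))^n)"
      using intGG by (intro sum.cong refl) auto
    finally show ?thesis by simp
  qed
  have key: "(\<integral>x. T x \<partial>Q) + (\<integral>x. L x * (1 - T x) \<partial>Q) = 1 + (\<integral>x. (L x - 1) * (1 - T x) \<partial>Q)"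
  proof -
    have "(\<lambda>x. (L x - 1) * (1 - T x)) = (\<lambda>x. L x * (1 - T x) - 1 + T x)" by (auto simp: algebra_simps)
    then show ?thesis using iLT iT by (simp add: Q.prob_space)
  qed
  have "- (\<integral>x. \<bar>L x - 1\<bar> \<partial>Q) \<le> (\<integral>x. (L x - 1) * (1 - T x) \<partial>Q)"
  proof -
    have "(\<integral>x. - \<bar>L x - 1\<bar> \<partial>Q) \<le> (\<integral>x. (L x - 1) * (1 - T x) \<partial>Q)"
    proof (rule integral_mono)
      show "integrable Q (\<lambda>x. - \<bar>L x - 1\<bar>)" using iLm1 by auto
      have "(\<lambda>x. (L x - 1) * (1 - T x)) = (\<lambda>x. L x * (1 - T x) - 1 + T x)" by (auto simp: algebra_simps)
      then show "integrable Q (\<lambda>x. (L x - 1) * (1 - T x))"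
        using iLT iT by simp
      fix x assume x: "x \<in> space Q"
      have "\<bar>(L x - 1) * (1 - T x)\<bar> \<le> \<bar>L x - 1\<bar> * 1"
        unfolding abs_mult using Tb'[OF x] by (intro mult_left_mono) auto
      then show "- \<bar>L x - 1\<bar> \<le> (L x - 1) * (1 - T x)" by (simp add: abs_le_iff)
    qed
    then show ?thesis by simp
  qed
  moreover have "(\<integral>x. \<bar>L x - 1\<bar> \<partial>Q) \<le> sqrt (\<integral>x. (L x - 1)^2 \<partial>Q)"
    using iLm1 iL2 by (intro sq_int_le) (auto intro: Q.prob_space_axioms)
  ultimately have fin: "1 - sqrt (\<integral>x. (L x - 1)^2 \<partial>Q) \<le> (\<integral>x. T x \<partial>Q) + (\<integral>x. L x * (1 - T x) \<partial>Q)"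
    using key by linarith
  show ?thesis using fin unfolding sumdens intL2 by (simp add: Q_def I_def)
qed

lemma cosh_le_small:
  fixes t :: real assumes "0 \<le> t" "t \<le> 1"
  shows "(exp t + exp (-t)) / 2 \<le> 1 + t^2"
proof -
  have e1: "exp t \<le> 1 + t + t^2" using exp_bound[OF assms] .
  have "exp t \<ge> 1 + t" by simp
  then have e2: "exp (-t) \<le> 1 / (1 + t)" using assms
    by (simp add: exp_minus divide_simps)
  have "(1 - t + t^2) * (1 + t) = 1 + t^3" by (simp add: algebra_simps power2_eq_square power3_eq_cube)
  moreover have "0 \<le> t^3" using assms by simp
  ultimately have "1 \<le> (1 - t + t^2) * (1 + t)" by simp
  then have "1 / (1 + t) \<le> 1 - t + t^2" using assms by (simp add: divide_le_eq)
  then show ?thesis using e1 e2 by simp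
qed

lemma sum_pm1_exp:
  fixes t c :: real assumes "c \<in> {-1,1}"
  shows "(\<Sum>v\<in>{-1,1::real}. exp (t * (v * c))) = exp t + exp (-t)"
  using assms by auto

lemma rad_bound:
  fixes B :: "nat set" and a :: real and n :: nat
  assumes B: "finite B" and a: "a^2 * real (card B) \<le> 1" and t: "real n * a^2 \<le> 1"
  shows "(\<Sum>\<xi>\<in>PiE B (\<lambda>_. {-1,1::real}). \<Sum>\<eta>\<in>PiE B (\<lambda>_. {-1,1::real}).
            (1 / 2 ^ card B) * (1 / 2 ^ card B) * (1 + a^2 * (\<Sum>k\<in>B. \<xi> k * \<eta> k))^n)
         \<le> exp (real (card B) * (real n * a^2)^2)"
proof -
  define D where "D = card B"
  define t where "t = real n * a^2"
  define P where "P = PiE B (\<lambda>_. {-1,1::real})"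
  have t0: "0 \<le> t" "t \<le> 1" using t by (auto simp: t_def)
  have cardP: "card P = 2 ^ D" unfolding P_def D_def using B by (simp add: card_PiE) (metis numeral_2_eq_2)
  have finP: "finite P" unfolding P_def using B by (simp add: finite_PiE)
  have step1: "(1 + a^2 * (\<Sum>k\<in>B. \<xi> k * \<eta> k))^n \<le> (\<Prod>k\<in>B. exp (t * (\<xi> k * \<eta> k)))"
    if "\<xi> \<in> P" "\<eta> \<in> P" for \<xi> \<eta>
  proof -
    have pm: "\<xi> k * \<eta> k \<in> {-1,1}" if "k \<in> B" for k
    proof -
      have "\<xi> k \<in> {-1,1}" "\<eta> k \<in> {-1,1}"
        using \<open>\<xi> \<in> P\<close> \<open>\<eta> \<in> P\<close> that by (auto simp: P_def PiE_def Pi_def)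
      then show ?thesis by auto
    qed
    have "\<bar>\<Sum>k\<in>B. \<xi> k * \<eta> k\<bar> \<le> (\<Sum>k\<in>B. \<bar>\<xi> k * \<eta> k\<bar>)" by (rule sum_abs)
    also have "\<dots> = (\<Sum>k\<in>B. 1)"
    proof (intro sum.cong refl)
      fix k assume "k \<in> B" then have "\<xi> k * \<eta> k = -1 \<or> \<xi> k * \<eta> k = 1" using pm by simp
      then show "\<bar>\<xi> k * \<eta> k\<bar> = 1" by (elim disjE) auto
    qed
    finally have sb: "\<bar>\<Sum>k\<in>B. \<xi> k * \<eta> k\<bar> \<le> real (card B)" by simp
    have "a^2 * \<bar>\<Sum>k\<in>B. \<xi> k * \<eta> k\<bar> \<le> a^2 * real (card B)"
      using sb by (intro mult_left_mono) auto
    have "- real (card B) \<le> (\<Sum>k\<in>B. \<xi> k * \<eta> k)" using sb by (simp add: abs_le_iff)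
    then have "a^2 * (- real (card B)) \<le> a^2 * (\<Sum>k\<in>B. \<xi> k * \<eta> k)" by (intro mult_left_mono) auto
    then have nn: "0 \<le> 1 + a^2 * (\<Sum>k\<in>B. \<xi> k * \<eta> k)" using a by simp
    have "(1 + a^2 * (\<Sum>k\<in>B. \<xi> k * \<eta> k))^n \<le> (exp (a^2 * (\<Sum>k\<in>B. \<xi> k * \<eta> k)))^n"
      using nn by (intro power_mono) auto
    also have "\<dots> = exp (t * (\<Sum>k\<in>B. \<xi> k * \<eta> k))"
      by (simp add: t_def exp_of_nat_mult[symmetric] mult.assoc)
    also have "\<dots> = (\<Prod>k\<in>B. exp (t * (\<xi> k * \<eta> k)))"
      using B by (simp add: sum_distrib_left exp_sum)
    finally show ?thesis .
  qed
  have step2: "(\<Sum>\<xi>\<in>P. \<Prod>k\<in>B. exp (t * (\<xi> k * \<eta> k))) = (exp t + exp (-t)) ^ D" if "\<eta> \<in> P" for \<eta>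
  proof -
    have "(\<Sum>\<xi>\<in>P. \<Prod>k\<in>B. exp (t * (\<xi> k * \<eta> k))) = (\<Prod>k\<in>B. \<Sum>v\<in>{-1,1::real}. exp (t * (v * \<eta> k)))"
      unfolding P_def using B by (subst prod_sum_PiE) auto
    also have "\<dots> = (\<Prod>k\<in>B. exp t + exp (-t))"
      using that by (intro prod.cong refl sum_pm1_exp) (auto simp: P_def PiE_def Pi_def)
    finally show ?thesis by (simp add: D_def)
  qed
  have "(\<Sum>\<xi>\<in>P. \<Sum>\<eta>\<in>P. (1 / 2 ^ D) * (1 / 2 ^ D) * (1 + a^2 * (\<Sum>k\<in>B. \<xi> k * \<eta> k))^n)
      \<le> (\<Sum>\<xi>\<in>P. \<Sum>\<eta>\<in>P. (1 / 2 ^ D) * (1 / 2 ^ D) * (\<Prod>k\<in>B. exp (t * (\<xi> k * \<eta> k))))"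
    using step1 by (intro sum_mono mult_left_mono) auto
  also have "\<dots> = (1 / 2 ^ D) * (1 / 2 ^ D) * (\<Sum>\<eta>\<in>P. \<Sum>\<xi>\<in>P. (\<Prod>k\<in>B. exp (t * (\<xi> k * \<eta> k))))"
    by (subst sum.swap) (simp add: sum_distrib_left)
  also have "\<dots> = (1 / 2 ^ D) * (1 / 2 ^ D) * (\<Sum>\<eta>\<in>P. (exp t + exp (-t)) ^ D)"
    using step2 by simp
  also have "\<dots> = ((exp t + exp (-t)) / 2) ^ D"
    using cardP by (simp add: power_divide)
  also have "\<dots> \<le> (1 + t^2) ^ D"
    using cosh_le_small[OF t0] by (intro power_mono) (auto intro: add_nonneg_nonneg)
  also have "\<dots> \<le> (exp (t^2)) ^ D"
    by (intro power_mono) auto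
  also have "\<dots> = exp (real D * t^2)" by (simp add: exp_of_nat_mult[symmetric])
  finally show ?thesis unfolding P_def D_def t_def .
qed

definition clamp1 :: "real \<Rightarrow> real" where "clamp1 v = max (-1) (min 1 v)"

definition bfun :: "(nat \<Rightarrow> 'a \<Rightarrow> real) \<Rightarrow> real \<Rightarrow> nat set \<Rightarrow> (nat \<Rightarrow> real) \<Rightarrow> 'a \<Rightarrow> real" where
  "bfun ph a B \<xi> x = clamp1 (a * (\<Sum>k\<in>B. \<xi> k * ph k x))"

lemma clamp1_bound: "\<bar>clamp1 v\<bar> \<le> 1" by (auto simp: clamp1_def)
lemma clamp1_id: "\<bar>v\<bar> \<le> 1 \<Longrightarrow> clamp1 v = v" by (auto simp: clamp1_def)

lemma borel_clamp1[measurable]: "clamp1 \<in> borel_measurable borel"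
  unfolding clamp1_def by measurable

locale phisys =
  fixes P0 :: "'a measure" and ph :: "nat \<Rightarrow> 'a \<Rightarrow> real" and Bp :: real
  assumes P0: "prob_space P0"
    and ph_meas: "\<And>k. ph k \<in> borel_measurable P0"
    and ph_bdd: "\<And>k. AE x in P0. \<bar>ph k x\<bar> \<le> Bp"
    and ph_orth: "\<And>j k. (\<integral>x. ph j x * ph k x \<partial>P0) = (if j = k then 1 else 0)"
    and ph_mean0: "\<And>k. (\<integral>x. ph k x \<partial>P0) = 0"
begin

interpretation prob_space P0 by (rule P0)

lemma Bp_nonneg: "0 \<le> Bp"
proof (rule ccontr)
  assume h: "\<not> 0 \<le> Bp"
  have "AE x in P0. False" using ph_bdd[of 0] by eventually_elim (use h in auto)
  then show False by (simp add: AE_False emeasure_space_1)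
qed

lemma int_ph: "integrable P0 (ph k)"
  using ph_bdd[of k] ph_meas[of k] by (intro integrable_const_bound[where B=Bp]) auto

lemma int_phph: "integrable P0 (\<lambda>x. ph j x * ph k x)"
proof (intro integrable_const_bound[where B="Bp * Bp"])
  show "AE x in P0. norm (ph j x * ph k x) \<le> Bp * Bp"
    using ph_bdd[of j] ph_bdd[of k] by eventually_elim (auto simp: abs_mult intro: mult_mono)
qed (use ph_meas in measurable)

lemma int_comb: "integrable P0 (\<lambda>x. \<Sum>k\<in>B. c k * ph k x)"
  using int_ph by auto

lemma int_comb_ph: "(\<integral>x. (\<Sum>k\<in>B. c k * ph k x) * ph j x \<partial>P0) = (if j \<in> B \<and> finite B then c j else 0)"
proof (cases "finite B")
  case True
  have "(\<integral>x. (\<Sum>k\<in>B. c k * ph k x) * ph j x \<partial>P0) = (\<Sum>k\<in>B. c k * (\<integral>x. ph k x * ph j x \<partial>P0))"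
    using int_phph by (simp add: sum_distrib_right mult.assoc integral_sum)
  also have "\<dots> = (\<Sum>k\<in>B. if k = j then c k else 0)" by (intro sum.cong) (auto simp: ph_orth)
  also have "\<dots> = (if j \<in> B then c j else 0)" using True by (simp add: sum.delta')
  finally show ?thesis using True by simp
qed simp

lemma int_comb_comb:
  assumes "finite B1" "finite B2"
  shows "(\<integral>x. (\<Sum>k\<in>B1. c1 k * ph k x) * (\<Sum>j\<in>B2. c2 j * ph j x) \<partial>P0) = (\<Sum>k\<in>B1 \<inter> B2. c1 k * c2 k)"
proof -
  have "(\<integral>x. (\<Sum>k\<in>B1. c1 k * ph k x) * (\<Sum>j\<in>B2. c2 j * ph j x) \<partial>P0)
      = (\<Sum>j\<in>B2. c2 j * (\<integral>x. (\<Sum>k\<in>B1. c1 k * ph k x) * ph j x \<partial>P0))"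
  proof -
    have "(\<lambda>x. (\<Sum>k\<in>B1. c1 k * ph k x) * (\<Sum>j\<in>B2. c2 j * ph j x)) = (\<lambda>x. \<Sum>j\<in>B2. c2 j * ((\<Sum>k\<in>B1. c1 k * ph k x) * ph j x))"
      by (auto simp: sum_distrib_left mult_ac)
    moreover have "integrable P0 (\<lambda>x. (\<Sum>k\<in>B1. c1 k * ph k x) * ph j x)" for j
      using int_phph by (simp add: sum_distrib_right mult.assoc)
    ultimately show ?thesis by (simp add: integral_sum)
  qed
  also have "\<dots> = (\<Sum>j\<in>B2. if j \<in> B1 then c2 j * c1 j else 0)"
    using assms by (intro sum.cong) (auto simp: int_comb_ph)
  also have "\<dots> = (\<Sum>k\<in>B1 \<inter> B2. c1 k * c2 k)"
    using assms by (simp add: sum.If_cases Int_commute mult.commute)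
  finally show ?thesis .
qed


lemma ph_meas'[measurable]: "ph k \<in> borel_measurable P0" by (rule ph_meas)

lemma bfun_meas[measurable]: "bfun ph a B \<xi> \<in> borel_measurable P0"
  unfolding bfun_def using ph_meas by measurable

lemma bfun_bdd: "\<bar>bfun ph a B \<xi> x\<bar> \<le> 1"
  unfolding bfun_def by (rule clamp1_bound)

lemma bfun_ae:
  assumes B: "finite B" and xi: "\<And>k. k \<in> B \<Longrightarrow> \<xi> k \<in> {-1,1}" and small: "\<bar>a\<bar> * real (card B) * Bp \<le> 1"
  shows "AE x in P0. bfun ph a B \<xi> x = (\<Sum>k\<in>B. (a * \<xi> k) * ph k x)"
proof -
  have "AE x in P0. \<forall>k\<in>B. \<bar>ph k x\<bar> \<le> Bp" using B ph_bdd by (simp add: AE_finite_all)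
  then show ?thesis
  proof eventually_elim
    case (elim x)
    have "\<bar>\<Sum>k\<in>B. \<xi> k * ph k x\<bar> \<le> (\<Sum>k\<in>B. \<bar>\<xi> k * ph k x\<bar>)" by (rule sum_abs)
    also have "\<dots> \<le> (\<Sum>k\<in>B. Bp)"
    proof (intro sum_mono)
      fix k assume k: "k \<in> B"
      have "\<bar>\<xi> k\<bar> = 1" using xi[OF k] by auto
      then show "\<bar>\<xi> k * ph k x\<bar> \<le> Bp" using elim k by (simp add: abs_mult)
    qed
    finally have "\<bar>\<Sum>k\<in>B. \<xi> k * ph k x\<bar> \<le> real (card B) * Bp" by simp
    then have "\<bar>a\<bar> * \<bar>\<Sum>k\<in>B. \<xi> k * ph k x\<bar> \<le> \<bar>a\<bar> * (real (card B) * Bp)" by (intro mult_left_mono) auto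
    then have "\<bar>a * (\<Sum>k\<in>B. \<xi> k * ph k x)\<bar> \<le> 1" using small by (simp add: abs_mult mult.assoc)
    then show ?case unfolding bfun_def by (simp add: clamp1_id sum_distrib_left mult.assoc)
  qed
qed

lemma bfun_int_ph:
  assumes B: "finite B" and xi: "\<And>k. k \<in> B \<Longrightarrow> \<xi> k \<in> {-1,1}" and small: "\<bar>a\<bar> * real (card B) * Bp \<le> 1"
  shows "(\<integral>x. bfun ph a B \<xi> x * ph j x \<partial>P0) = (if j \<in> B then a * \<xi> j else 0)"
proof -
  have "(\<integral>x. bfun ph a B \<xi> x * ph j x \<partial>P0) = (\<integral>x. (\<Sum>k\<in>B. (a * \<xi> k) * ph k x) * ph j x \<partial>P0)"
  proof (rule integral_cong_AE)
    have ae: "AE x in P0. bfun ph a B \<xi> x = (\<Sum>k\<in>B. (a * \<xi> k) * ph k x)" by (rule bfun_ae[OF assms])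
    then show "AE x in P0. bfun ph a B \<xi> x * ph j x = (\<Sum>k\<in>B. (a * \<xi> k) * ph k x) * ph j x" by eventually_elim simp
  qed measurable
  then show ?thesis using B by (simp add: int_comb_ph)
qed

lemma bfun_int0:
  assumes B: "finite B" and xi: "\<And>k. k \<in> B \<Longrightarrow> \<xi> k \<in> {-1,1}" and small: "\<bar>a\<bar> * real (card B) * Bp \<le> 1"
  shows "(\<integral>x. bfun ph a B \<xi> x \<partial>P0) = 0"
proof -
  have "(\<integral>x. bfun ph a B \<xi> x \<partial>P0) = (\<integral>x. (\<Sum>k\<in>B. (a * \<xi> k) * ph k x) \<partial>P0)"
  proof (rule integral_cong_AE)
    have ae: "AE x in P0. bfun ph a B \<xi> x = (\<Sum>k\<in>B. (a * \<xi> k) * ph k x)" by (rule bfun_ae[OF assms])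
    then show "AE x in P0. bfun ph a B \<xi> x = (\<Sum>k\<in>B. (a * \<xi> k) * ph k x)" by eventually_elim simp
  qed measurable
  also have "\<dots> = 0" using int_ph by (simp add: integral_sum ph_mean0)
  finally show ?thesis .
qed

lemma bfun_int_bfun:
  assumes B: "finite B" and xi: "\<And>k. k \<in> B \<Longrightarrow> \<xi> k \<in> {-1,1}" and small: "\<bar>a\<bar> * real (card B) * Bp \<le> 1"
  assumes B': "finite B'" and xi': "\<And>k. k \<in> B' \<Longrightarrow> \<xi>' k \<in> {-1,1}" and small': "\<bar>a'\<bar> * real (card B') * Bp \<le> 1"
  shows "(\<integral>x. bfun ph a B \<xi> x * bfun ph a' B' \<xi>' x \<partial>P0) = a * a' * (\<Sum>k\<in>B \<inter> B'. \<xi> k * \<xi>' k)"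
proof -
  have "(\<integral>x. bfun ph a B \<xi> x * bfun ph a' B' \<xi>' x \<partial>P0)
     = (\<integral>x. (\<Sum>k\<in>B. (a * \<xi> k) * ph k x) * (\<Sum>k\<in>B'. (a' * \<xi>' k) * ph k x) \<partial>P0)"
  proof (rule integral_cong_AE)
    have ae: "AE x in P0. bfun ph a B \<xi> x = (\<Sum>k\<in>B. (a * \<xi> k) * ph k x)" by (rule bfun_ae[OF B xi small])
    have ae': "AE x in P0. bfun ph a' B' \<xi>' x = (\<Sum>k\<in>B'. (a' * \<xi>' k) * ph k x)" by (rule bfun_ae[OF B' xi' small'])
    from ae ae' show "AE x in P0. bfun ph a B \<xi> x * bfun ph a' B' \<xi>' x = (\<Sum>k\<in>B. (a * \<xi> k) * ph k x) * (\<Sum>k\<in>B'. (a' * \<xi>' k) * ph k x)" by eventually_elim simp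
  qed measurable
  also have "\<dots> = (\<Sum>k\<in>B \<inter> B'. (a * \<xi> k) * (a' * \<xi>' k))" using B B' by (rule int_comb_comb)
  also have "\<dots> = a * a' * (\<Sum>k\<in>B \<inter> B'. \<xi> k * \<xi>' k)" by (simp add: sum_distrib_left mult_ac)
  finally show ?thesis .
qed


lemma bfun_Palt:
  fixes lam :: "nat \<Rightarrow> real"
  assumes B: "finite B" "B \<noteq> {}" and xi: "\<And>k. k \<in> B \<Longrightarrow> \<xi> k \<in> {-1,1}"
    and small: "\<bar>a\<bar> * real (card B) * Bp \<le> 1" and a0: "a \<noteq> 0"
    and lam: "\<And>k. 0 < lam k"
    and Nb: "(\<Sum>k\<in>B. a^2 / lam k) \<le> Nb"
    and th: "0 < \<theta>" and Mc: "0 < Mc"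
    and cond: "sqrt (a^2 * real (card B)) \<le> Mc * (sqrt Nb) powr (-1/\<theta>)"
    and Delta: "\<Delta> \<le> a^2 * real (card B)"
  shows "density P0 (\<lambda>x. ennreal (1 + bfun ph a B \<xi> x)) \<in> Palt P0 lam ph \<Delta> \<theta> Mc"
proof -
  define u where "u = bfun ph a B \<xi>"
  define Pm where "Pm = density P0 (\<lambda>x. ennreal (1 + u x))"
  define dd where "dd = density_dev P0 Pm"
  define \<rho> where "\<rho> = sqrt (a^2 * real (card B))"
  have um[measurable]: "u \<in> borel_measurable P0" unfolding u_def by measurable
  have ub: "\<bar>u x\<bar> \<le> 1" for x unfolding u_def by (rule bfun_bdd)
  have u0: "(\<integral>x. u x \<partial>P0) = 0" unfolding u_def by (rule bfun_int0[OF B(1) xi small])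
  have iu: "integrable P0 u" using um ub by (intro integrable_const_bound[where B=1]) auto
  have iuu: "integrable P0 (\<lambda>x. (c * u x)^2)" for c
  proof (intro integrable_const_bound[where B="c^2"])
    show "AE x in P0. norm ((c * u x)^2) \<le> c^2"
    proof (intro AE_I2)
      fix x have "(u x)^2 \<le> 1" using ub[of x] by (simp add: abs_square_le_1)
      then show "norm ((c * u x)^2) \<le> c^2" by (simp add: power_mult_distrib mult_left_le)
    qed
  qed measurable
  have uu: "(\<integral>x. u x * u x \<partial>P0) = a^2 * real (card B)"
  proof -
    have "(\<integral>x. u x * u x \<partial>P0) = a * a * (\<Sum>k\<in>B \<inter> B. \<xi> k * \<xi> k)"
      unfolding u_def by (rule bfun_int_bfun[OF B(1) xi small B(1) xi small])
    also have "(\<Sum>k\<in>B \<inter> B. \<xi> k * \<xi> k) = (\<Sum>k\<in>B. 1)"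
    proof (intro sum.cong)
      fix k assume "k \<in> B" then have "\<xi> k \<in> {-1,1}" using xi by auto
      then show "\<xi> k * \<xi> k = 1" by auto
    qed simp
    finally show ?thesis by (simp add: power2_eq_square)
  qed
  have coefu: "coef P0 ph u k = (if k \<in> B then a * \<xi> k else 0)" for k
    unfolding coef_def u_def by (rule bfun_int_ph[OF B(1) xi small])
  have Pm_sets: "sets Pm = sets P0" unfolding Pm_def by simp
  have Pm_prob: "prob_space Pm" unfolding Pm_def using um ub u0 by (intro prob_density1 P0) auto
  have Pm_ac: "absolutely_continuous P0 Pm" unfolding Pm_def by (intro absolutely_continuousI_density) measurable
  have dd_ae: "AE x in P0. dd x = u x"
  proof -
    have "AE x in P0. ennreal (1 + u x) = RN_deriv P0 Pm x"
      unfolding Pm_def by (intro sigma_finite_measure.RN_deriv_unique prob_space_imp_sigma_finite P0) auto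
    then show ?thesis
    proof eventually_elim
      case (elim x)
      have "0 \<le> 1 + u x" using ub[of x] by (simp add: abs_le_iff)
      then show ?case unfolding dd_def density_dev_def using elim[symmetric] by simp
    qed
  qed
  have dd_m[measurable]: "dd \<in> borel_measurable P0" unfolding dd_def density_dev_def by measurable
  have L2_dd_scaled: "L2norm P0 (\<lambda>x. dd x - c * u x) = \<bar>1 - c\<bar> * \<rho>" for c
  proof -
    have "(\<integral>x. (dd x - c * u x)^2 \<partial>P0) = (\<integral>x. ((1 - c) * u x)^2 \<partial>P0)"
    proof (rule integral_cong_AE)
      show "AE x in P0. (dd x - c * u x)^2 = ((1 - c) * u x)^2" using dd_ae by eventually_elim (simp add: algebra_simps)
    qed measurable
    also have "\<dots> = (1 - c)^2 * (\<integral>x. u x * u x \<partial>P0)"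
      by (simp add: power_mult_distrib power2_eq_square[of "u _"])
    finally show ?thesis unfolding L2norm_def \<rho>_def uu by (simp add: real_sqrt_mult)
  qed
  define NK where "NK = sqrt (\<Sum>k\<in>B. a^2 / lam k)"
  have NKpos: "0 < NK"
  proof -
    obtain k where "k \<in> B" using B(2) by auto
    have "0 < (\<Sum>k\<in>B. a^2 / lam k)"
      using B lam a0 by (intro sum_pos) auto
    then show ?thesis unfolding NK_def by simp
  qed
  have NKle: "NK \<le> sqrt Nb" unfolding NK_def using Nb by simp
  have scaled: "in_RKHS P0 lam ph (\<lambda>x. c * u x) \<and> RKHS_norm P0 lam ph (\<lambda>x. c * u x) = \<bar>c\<bar> * NK" for c
  proof -
    have cf: "coef P0 ph (\<lambda>x. c * u x) k = (if k \<in> B then c * (a * \<xi> k) else 0)" for k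
      using coefu[of k] unfolding coef_def by (simp add: mult.assoc)
    have fin: "(\<lambda>k. (coef P0 ph (\<lambda>x. c * u x) k)^2 / lam k) = (\<lambda>k. if k \<in> B then c^2 * (a^2 / lam k) else 0)"
    proof
      fix k show "(coef P0 ph (\<lambda>x. c * u x) k)^2 / lam k = (if k \<in> B then c^2 * (a^2 / lam k) else 0)"
      proof (cases "k \<in> B")
        case True then have "\<xi> k \<in> {-1,1}" using xi by auto
        then have "(\<xi> k)^2 = 1" by auto
        then show ?thesis using True cf[of k] by (simp add: power_mult_distrib)
      qed (simp add: cf)
    qed
    have summ: "summable (\<lambda>k. (coef P0 ph (\<lambda>x. c * u x) k)^2 / lam k)"
      unfolding fin using B by (intro summable_finite[of B]) auto
    have suminf: "(\<Sum>k. (coef P0 ph (\<lambda>x. c * u x) k)^2 / lam k) = c^2 * (\<Sum>k\<in>B. a^2 / lam k)"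
      unfolding fin using B by (subst suminf_finite[of B]) (auto simp: sum_distrib_left)
    have L2: "(\<lambda>x. c * u x) \<in> L2 P0" unfolding L2_def using iuu[of c] by auto
    have m0: "(\<integral>x. c * u x \<partial>P0) = 0" using u0 by simp
    show ?thesis
      unfolding in_RKHS_def RKHS_norm_def suminf NK_def
      using L2 m0 summ by (simp add: real_sqrt_mult)
  qed
  have FC: "dd \<in> Fclass P0 lam ph \<theta> Mc"
    unfolding Fclass_def
  proof (intro CollectI conjI allI impI)
    show "dd \<in> L2 P0" unfolding L2_def
    proof (intro CollectI conjI dd_m)
      have "integrable P0 (\<lambda>x. (1 * u x)^2)" by (rule iuu)
      then show "integrable P0 (\<lambda>x. (dd x)^2)"
        by (rule integrable_cong_AE_imp) (use dd_ae in \<open>auto elim: AE_mp\<close>)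
    qed
    fix R :: real assume R: "0 < R"
    show "\<exists>fR. in_RKHS P0 lam ph fR \<and> RKHS_norm P0 lam ph fR \<le> R \<and> L2norm P0 (\<lambda>x. dd x - fR x) \<le> Mc * R powr (- 1 / \<theta>)"
    proof (cases "NK \<le> R")
      case True
      have "L2norm P0 (\<lambda>x. dd x - 1 * u x) = 0" using L2_dd_scaled[of 1] by simp
      moreover have "0 \<le> Mc * R powr (- 1 / \<theta>)" using Mc by simp
      ultimately show ?thesis using scaled[of 1] True by (intro exI[of _ "\<lambda>x. 1 * u x"]) auto
    next
      case False
      define c where "c = R / NK"
      have c01: "0 < c" "c < 1" using False R NKpos by (auto simp: c_def divide_simps)
      have "L2norm P0 (\<lambda>x. dd x - c * u x) = (1 - c) * \<rho>" using L2_dd_scaled[of c] c01 by simp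
      also have "\<dots> \<le> \<rho>" using c01 by (simp add: \<rho>_def mult_left_le_one_le)
      also have "\<dots> \<le> Mc * (sqrt Nb) powr (-1/\<theta>)" using cond by (simp add: \<rho>_def)
      also have "\<dots> \<le> Mc * NK powr (-1/\<theta>)"
        using NKle NKpos th Mc by (intro mult_left_mono powr_mono2') auto
      also have "\<dots> \<le> Mc * R powr (-1/\<theta>)"
        using False R th Mc by (intro mult_left_mono powr_mono2') auto
      finally have "L2norm P0 (\<lambda>x. dd x - c * u x) \<le> Mc * R powr (- 1 / \<theta>)" by simp
      moreover have "RKHS_norm P0 lam ph (\<lambda>x. c * u x) = R" using scaled[of c] c01 NKpos R by (simp add: c_def)
      ultimately show ?thesis using scaled[of c] by (intro exI[of _ "\<lambda>x. c * u x"]) auto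
    qed
  qed
  have "L2norm P0 dd = \<rho>"
  proof -
    have "L2norm P0 (\<lambda>x. dd x - 0 * u x) = \<rho>" using L2_dd_scaled[of 0] by simp
    then show ?thesis by simp
  qed
  then have "(L2norm P0 dd)^2 = a^2 * real (card B)" by (simp add: \<rho>_def)
  then show ?thesis
    unfolding Palt_def using Pm_sets Pm_prob Pm_ac FC Delta
    by (simp add: Pm_def[symmetric] dd_def[symmetric] u_def[symmetric])
qed

end

lemma tests_space:
  assumes "sets P = sets P0"
  shows "space (PiM {..<n} (\<lambda>_. P)) = space (PiM {..<n} (\<lambda>_. P0))"
proof -
  have "space P = space P0" using assms by (rule sets_eq_imp_space_eq)
  then show ?thesis by (simp add: space_PiM)
qed

lemma test_int_le1:
  assumes T: "T \<in> tests P0 n" and P: "prob_space P" "sets P = sets P0"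
  shows "(\<integral>x. 1 - T x \<partial>PiM {..<n} (\<lambda>_. P)) \<le> 1" "0 \<le> (\<integral>x. 1 - T x \<partial>PiM {..<n} (\<lambda>_. P))"
proof -
  interpret Q: prob_space "PiM {..<n} (\<lambda>_. P)" by (intro prob_space_PiM P(1))
  have sp: "space (PiM {..<n} (\<lambda>_. P)) = space (PiM {..<n} (\<lambda>_. P0))" by (rule tests_space[OF P(2)])
  have sets: "sets (PiM {..<n} (\<lambda>_. P)) = sets (PiM {..<n} (\<lambda>_. P0))" by (intro sets_PiM_cong) (auto simp: P(2))
  have Tm0: "T \<in> borel_measurable (PiM {..<n} (\<lambda>_. P0))" using T unfolding tests_def by blast
  have Tm: "T \<in> borel_measurable (PiM {..<n} (\<lambda>_. P))"
    using Tm0 by (simp only: measurable_cong_sets[OF sets refl])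
  have Tb: "\<And>x. x \<in> space (PiM {..<n} (\<lambda>_. P)) \<Longrightarrow> 0 \<le> T x \<and> T x \<le> 1"
    using T unfolding sp tests_def by blast
  have int: "integrable (PiM {..<n} (\<lambda>_. P)) (\<lambda>x. 1 - T x)"
    using Tm Tb by (intro bdd_integrable[where B=1] Q.finite_measure_axioms) auto
  have "(\<integral>x. 1 - T x \<partial>PiM {..<n} (\<lambda>_. P)) \<le> (\<integral>x. 1 \<partial>PiM {..<n} (\<lambda>_. P))"
    using int Tb by (intro integral_mono) auto
  then show "(\<integral>x. 1 - T x \<partial>PiM {..<n} (\<lambda>_. P)) \<le> 1" by (simp add: Q.prob_space)
  show "0 \<le> (\<integral>x. 1 - T x \<partial>PiM {..<n} (\<lambda>_. P))"
    using Tb by (intro integral_nonneg_AE AE_I2) auto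
qed

lemma Palt_prob: "P \<in> Palt P0 lam ph \<Delta> \<theta> Mc \<Longrightarrow> prob_space P \<and> sets P = sets P0"
  unfolding Palt_def by blast

lemma type2_bdd:
  assumes T: "T \<in> tests P0 n"
  shows "bdd_above ((\<lambda>P. \<integral>x. 1 - T x \<partial>PiM {..<n} (\<lambda>_. P)) ` Palt P0 lam ph \<Delta> \<theta> Mc)"
proof (rule bdd_aboveI[where M=1])
  fix y assume "y \<in> (\<lambda>P. \<integral>x. 1 - T x \<partial>PiM {..<n} (\<lambda>_. P)) ` Palt P0 lam ph \<Delta> \<theta> Mc"
  then obtain P where P: "P \<in> Palt P0 lam ph \<Delta> \<theta> Mc" and y: "y = (\<integral>x. 1 - T x \<partial>PiM {..<n} (\<lambda>_. P))" by blast
  show "y \<le> 1" unfolding y using Palt_prob[OF P] test_int_le1(1)[OF T] by blast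
qed

lemma type2_le1:
  assumes T: "T \<in> tests P0 n"
  shows "type2 P0 lam ph n T \<Delta> \<theta> Mc \<le> 1" "0 \<le> type2 P0 lam ph n T \<Delta> \<theta> Mc"
proof -
  show "type2 P0 lam ph n T \<Delta> \<theta> Mc \<le> 1"
    unfolding type2_def
  proof (rule cSup_least)
    fix y assume "y \<in> insert 0 ((\<lambda>P. \<integral>x. 1 - T x \<partial>PiM {..<n} (\<lambda>_. P)) ` Palt P0 lam ph \<Delta> \<theta> Mc)"
    then show "y \<le> 1"
    proof
      assume "y \<in> (\<lambda>P. \<integral>x. 1 - T x \<partial>PiM {..<n} (\<lambda>_. P)) ` Palt P0 lam ph \<Delta> \<theta> Mc"
      then obtain P where P: "P \<in> Palt P0 lam ph \<Delta> \<theta> Mc" and y: "y = (\<integral>x. 1 - T x \<partial>PiM {..<n} (\<lambda>_. P))" by blast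
      show "y \<le> 1" unfolding y using Palt_prob[OF P] test_int_le1(1)[OF T] by blast
    qed simp
  qed simp
  show "0 \<le> type2 P0 lam ph n T \<Delta> \<theta> Mc"
    unfolding type2_def using type2_bdd[OF T]
    by (intro cSup_upper) (simp_all add: bdd_above_insert)
qed

lemma type2_ge:
  assumes T: "T \<in> tests P0 n" and P: "P \<in> Palt P0 lam ph \<Delta> \<theta> Mc"
  shows "(\<integral>x. 1 - T x \<partial>PiM {..<n} (\<lambda>_. P)) \<le> type2 P0 lam ph n T \<Delta> \<theta> Mc"
  unfolding type2_def using type2_bdd[OF T] P
  by (intro cSup_upper) (simp_all add: bdd_above_insert)

lemma sum_Sigma':
  assumes "finite J" "\<And>j. j \<in> J \<Longrightarrow> finite (P j)"
  shows "(\<Sum>s\<in>Sigma J P. f s) = (\<Sum>j\<in>J. \<Sum>\<xi>\<in>P j. f (j, \<xi>))"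
  using sum.Sigma[of J P "\<lambda>j \<xi>. f (j, \<xi>)"] assms by (simp add: case_prod_beta')

lemma double_mix_bound:
  fixes J :: "nat set" and P :: "nat \<Rightarrow> 'x set" and q :: "nat \<Rightarrow> 'x \<Rightarrow> real"
    and F :: "nat \<Rightarrow> 'x \<Rightarrow> nat \<Rightarrow> 'x \<Rightarrow> real"
  assumes J: "finite J" "J \<noteq> {}" and P: "\<And>j. j \<in> J \<Longrightarrow> finite (P j)"
    and q1: "\<And>j. j \<in> J \<Longrightarrow> (\<Sum>\<xi>\<in>P j. q j \<xi>) = 1"
    and off: "\<And>j j' \<xi> \<xi>'. j \<in> J \<Longrightarrow> j' \<in> J \<Longrightarrow> j \<noteq> j' \<Longrightarrow> \<xi> \<in> P j \<Longrightarrow> \<xi>' \<in> P j' \<Longrightarrow> F j \<xi> j' \<xi>' = 1"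
    and diag: "\<And>j. j \<in> J \<Longrightarrow> (\<Sum>\<xi>\<in>P j. \<Sum>\<xi>'\<in>P j. q j \<xi> * q j \<xi>' * F j \<xi> j \<xi>') \<le> E"
  shows "(\<Sum>s\<in>Sigma J P. \<Sum>t\<in>Sigma J P. (q (fst s) (snd s) / card J) * (q (fst t) (snd t) / card J) * F (fst s) (snd s) (fst t) (snd t))
         \<le> E / card J + (real (card J) - 1) / card J"
proof -
  define m where "m = real (card J)"
  have m0: "0 < m" using J by (simp add: m_def card_gt_0_iff)
  define G where "G j j' = (\<Sum>\<xi>\<in>P j. \<Sum>\<xi>'\<in>P j'. q j \<xi> * q j' \<xi>' * F j \<xi> j' \<xi>')" for j j'
  have Goff: "G j j' = 1" if "j \<in> J" "j' \<in> J" "j \<noteq> j'" for j j'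
  proof -
    have "G j j' = (\<Sum>\<xi>\<in>P j. \<Sum>\<xi>'\<in>P j'. q j \<xi> * q j' \<xi>')"
      unfolding G_def using off[OF that] by (intro sum.cong refl) auto
    also have "\<dots> = (\<Sum>\<xi>\<in>P j. q j \<xi>) * (\<Sum>\<xi>'\<in>P j'. q j' \<xi>')" by (simp add: sum_product)
    finally show ?thesis using q1 that by simp
  qed
  have rowsum: "(\<Sum>j'\<in>J. G j j') \<le> E + (m - 1)" if j: "j \<in> J" for j
  proof -
    have "(\<Sum>j'\<in>J. G j j') = G j j + (\<Sum>j'\<in>J - {j}. G j j')"
      using J j by (simp add: sum.remove)
    also have "(\<Sum>j'\<in>J - {j}. G j j') = (\<Sum>j'\<in>J - {j}. 1)"
      using Goff j by (intro sum.cong refl) auto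
    also have "\<dots> = m - 1" using J j by (simp add: m_def of_nat_diff card_gt_0_iff Suc_leI)
    finally show ?thesis using diag[OF j] unfolding G_def by simp
  qed
  have "(\<Sum>s\<in>Sigma J P. \<Sum>t\<in>Sigma J P. (q (fst s) (snd s) / card J) * (q (fst t) (snd t) / card J) * F (fst s) (snd s) (fst t) (snd t))
      = (\<Sum>j\<in>J. \<Sum>\<xi>\<in>P j. \<Sum>j'\<in>J. \<Sum>\<xi>'\<in>P j'. (q j \<xi> / m) * (q j' \<xi>' / m) * F j \<xi> j' \<xi>')"
    using J P by (simp add: sum_Sigma' m_def)
  also have "\<dots> = (\<Sum>j\<in>J. \<Sum>j'\<in>J. G j j' / m^2)"
  proof (intro sum.cong refl)
    fix j assume j: "j \<in> J"
    have "(\<Sum>\<xi>\<in>P j. \<Sum>j'\<in>J. \<Sum>\<xi>'\<in>P j'. (q j \<xi> / m) * (q j' \<xi>' / m) * F j \<xi> j' \<xi>')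
        = (\<Sum>j'\<in>J. \<Sum>\<xi>\<in>P j. \<Sum>\<xi>'\<in>P j'. (q j \<xi> / m) * (q j' \<xi>' / m) * F j \<xi> j' \<xi>')"
      by (rule sum.swap)
    also have "\<dots> = (\<Sum>j'\<in>J. G j j' / m^2)"
      unfolding G_def by (intro sum.cong refl) (simp add: sum_divide_distrib power2_eq_square)
    finally show "(\<Sum>\<xi>\<in>P j. \<Sum>j'\<in>J. \<Sum>\<xi>'\<in>P j'. (q j \<xi> / m) * (q j' \<xi>' / m) * F j \<xi> j' \<xi>') = (\<Sum>j'\<in>J. G j j' / m^2)" .
  qed
  also have "\<dots> = (\<Sum>j\<in>J. (\<Sum>j'\<in>J. G j j') / m^2)" by (simp add: sum_divide_distrib)
  also have "\<dots> \<le> (\<Sum>j\<in>J. (E + (m - 1)) / m^2)"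
    using rowsum m0 by (intro sum_mono divide_right_mono) auto
  also have "\<dots> = m * (E + (m - 1)) / m^2" by (simp add: m_def)
  also have "\<dots> = E / m + (m - 1) / m" using m0 by (simp add: power2_eq_square divide_simps)
  finally show ?thesis by (simp add: m_def)
qed

lemma lam_lower:
  fixes lam :: "nat \<Rightarrow> real"
  assumes pos: "\<forall>k. 0 < lam k" and li: "0 < liminf (\<lambda>k. ereal ((real (Suc k)) powr (2 * s) * lam k))"
  shows "\<exists>cl>0. \<forall>k. cl \<le> (real (Suc k)) powr (2 * s) * lam k"
proof -
  obtain y where y: "0 < y" "ereal y < liminf (\<lambda>k. ereal ((real (Suc k)) powr (2 * s) * lam k))"
    using ereal_dense2[OF li] by auto
  have "eventually (\<lambda>k. ereal y < ereal ((real (Suc k)) powr (2 * s) * lam k)) sequentially"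
    using y(2) by (rule less_LiminfD)
  then obtain K where K: "\<And>k. k \<ge> K \<Longrightarrow> y < (real (Suc k)) powr (2 * s) * lam k"
    by (auto simp: eventually_sequentially)
  define cl where "cl = min y (Min ((\<lambda>k. (real (Suc k)) powr (2 * s) * lam k) ` {..K}))"
  have pos': "0 < (real (Suc k)) powr (2 * s) * lam k" for k using pos by simp
  have "0 < cl" unfolding cl_def using y(1) pos' by (auto simp: Min_gr_iff)
  moreover have "cl \<le> (real (Suc k)) powr (2 * s) * lam k" for k
  proof (cases "k \<le> K")
    case True then show ?thesis unfolding cl_def by (intro min.coboundedI2 Min_le) auto
  next
    case False then show ?thesis using K[of k] unfolding cl_def by auto
  qed
  ultimately show ?thesis by blast
qed

context phisys
begin

lemma lower_bound_n:
  fixes lam :: "nat \<Rightarrow> real" and \<Delta> :: "real \<Rightarrow> real" and s Mc \<theta>1 \<theta>2 cl Cb N L :: real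
    and n :: nat and T :: "(nat \<Rightarrow> 'a) \<Rightarrow> real" and J :: "nat set"
  assumes lam: "\<And>k. 0 < lam k" and cl: "0 < cl" "\<And>k. cl \<le> ((real (Suc k)) powr (2 * s)) * lam k"
    and s: "s > 1/2" and Mc: "0 < Mc" and th: "0 < \<theta>1" "\<theta>1 < \<theta>2" "\<theta>2 < 2 * s - 1"
    and Bp1: "1 \<le> Bp"
    and N: "1 < N" and L: "0 < L" and nNL: "real n = N * sqrt L"
    and Cb: "0 < Cb" "Cb \<le> 1/2" "ln Cb \<le> (2/(\<theta>1+1)) * (ln cl / 2 - s * ln 2 - \<theta>2 * \<bar>ln Mc\<bar>)"
    and Dl: "\<And>\<theta>. \<theta> \<in> {\<theta>1..\<theta>2} \<Longrightarrow> \<Delta> \<theta> * N powr (4 * s/(4 * s+\<theta>+1)) \<le> Cb"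
    and e2: "Cb * N powr (2 - 3 * (4 * s/(4 * s+\<theta>2+1))) * Bp^2 \<le> 1"
    and e3: "Cb * sqrt L * N powr (4 * s/(4 * s+\<theta>1+1) - 1) \<le> 1"
    and J: "J = {j. N powr (2 - 2*(4 * s/(4 * s+\<theta>1+1))) \<le> 2^j \<and> 2^j \<le> N powr (2 - 2*(4 * s/(4 * s+\<theta>2+1)))}"
    and Jne: "J \<noteq> {}"
    and T: "T \<in> tests P0 n"
  shows "1 - sqrt ((exp (Cb^2 * L) - 1) / card J)
     \<le> (\<integral>x. T x \<partial>PiM {..<n} (\<lambda>_. P0)) + (SUP \<theta>\<in>{\<theta>1..\<theta>2}. type2 P0 lam ph n T (\<Delta> \<theta>) \<theta> Mc)"
proof -
  define \<alpha>1 where "\<alpha>1 = 4 * s/(4 * s+\<theta>1+1)"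
  define \<alpha>2 where "\<alpha>2 = 4 * s/(4 * s+\<theta>2+1)"
  define lN where "lN = ln N"
  have lN: "0 < lN" using N by (simp add: lN_def)
  have s0: "0 < s" using s by simp
  have a2pos: "0 < \<alpha>2" using s0 th by (simp add: \<alpha>2_def)
  have a21: "\<alpha>2 < \<alpha>1" unfolding \<alpha>1_def \<alpha>2_def using s0 th
    by (intro divide_strict_left_mono) auto
  have a11: "\<alpha>1 < 1" unfolding \<alpha>1_def using s0 th by (simp add: divide_simps)
  have Jfin: "finite J"
  proof (rule finite_subset)
    show "J \<subseteq> {..nat \<lceil>N powr (2 - 2*\<alpha>2)\<rceil>}"
    proof
      fix j assume "j \<in> J"
      then have "2^j \<le> N powr (2 - 2*\<alpha>2)" unfolding J \<alpha>2_def by auto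
      moreover have "real j < 2^j"
      proof -
        have "j < 2^j" by (rule less_exp)
        then have "real j < real (2^j)" by (simp only: of_nat_less_iff)
        then show ?thesis by simp
      qed
      ultimately have "real j \<le> \<lceil>N powr (2 - 2*\<alpha>2)\<rceil>" by linarith
      then have "int j \<le> \<lceil>N powr (2 - 2*\<alpha>2)\<rceil>" by linarith
      then show "j \<in> {..nat \<lceil>N powr (2 - 2*\<alpha>2)\<rceil>}" by simp
    qed
  qed simp
  define Bl where "Bl j = {2^j..<2^(Suc j)::nat}" for j :: nat
  have Bl_card: "card (Bl j) = 2^j" for j by (simp add: Bl_def)
  have Bl_fin: "finite (Bl j)" for j by (simp add: Bl_def)
  have Bl_ne: "Bl j \<noteq> {}" for j by (simp add: Bl_def)
  have Bl_disj: "Bl j \<inter> Bl j' = {}" if "j \<noteq> j'" for j j'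
  proof -
    { fix j j' :: nat assume "j < j'"
      then have "2^(Suc j) \<le> (2::nat)^j'" by (intro power_increasing) auto
      then have "Bl j \<inter> Bl j' = {}" by (auto simp: Bl_def) }
    then show ?thesis using that by (metis Int_commute linorder_neqE_nat)
  qed
  define a where "a j = sqrt (Cb / (N * sqrt (2^j)))" for j :: nat
  define al where "al j = 1 - ln (2^j) / (2*lN)" for j :: nat
  define tj where "tj j = 4 * s/al j - 4 * s - 1" for j :: nat
  have jfacts: "tj j \<in> {\<theta>1..\<theta>2} \<and> \<bar>a j\<bar> * real (card (Bl j)) * Bp \<le> 1 \<and> a j \<noteq> 0 \<and>
      (a j)^2 * real (card (Bl j)) \<le> 1 \<and> real n * (a j)^2 \<le> 1 \<and>
      real (card (Bl j)) * (real n * (a j)^2)^2 = Cb^2 * L \<and>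
      density P0 (\<lambda>x. ennreal (1 + bfun ph (a j) (Bl j) \<xi> x)) \<in> Palt P0 lam ph (\<Delta> (tj j)) (tj j) Mc"
    if j: "j \<in> J" and xi: "\<And>k. k \<in> Bl j \<Longrightarrow> \<xi> k \<in> {-1,1}" for j \<xi>
  proof -
    define D where "D = (2::real)^j"
    have D1: "1 \<le> D" unfolding D_def by simp
    have Dpos: "0 < D" using D1 by simp
    have cardB: "real (card (Bl j)) = D" unfolding D_def Bl_card by simp
    have Jj: "N powr (2 - 2*\<alpha>1) \<le> D" "D \<le> N powr (2 - 2*\<alpha>2)"
      using j unfolding J D_def \<alpha>1_def \<alpha>2_def by auto
    have lnD: "(2 - 2*\<alpha>1) * lN \<le> ln D" "ln D \<le> (2 - 2*\<alpha>2) * lN"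
    proof -
      have "ln (N powr (2 - 2*\<alpha>1)) \<le> ln D" using Jj(1) Dpos N by (subst ln_le_cancel_iff) auto
      then show "(2 - 2*\<alpha>1) * lN \<le> ln D" by (simp add: lN_def)
      have "ln D \<le> ln (N powr (2 - 2*\<alpha>2))" using Jj(2) Dpos N by (subst ln_le_cancel_iff) auto
      then show "ln D \<le> (2 - 2*\<alpha>2) * lN" by (simp add: lN_def)
    qed
    have alD: "al j = 1 - ln D / (2*lN)" unfolding al_def D_def by simp
    have lnD_eq: "ln D = 2 * (1 - al j) * lN" using lN unfolding alD by (simp add: field_simps)
    have al_rng: "\<alpha>2 \<le> al j" "al j \<le> \<alpha>1"
    proof -
      have "ln D / (2*lN) \<le> 1 - \<alpha>2" using lnD(2) lN by (simp add: divide_simps algebra_simps)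
      then show "\<alpha>2 \<le> al j" unfolding alD by simp
      have "1 - \<alpha>1 \<le> ln D / (2*lN)" using lnD(1) lN by (simp add: divide_simps algebra_simps)
      then show "al j \<le> \<alpha>1" unfolding alD by simp
    qed
    have alpos: "0 < al j" using al_rng a2pos by simp
    have tj_eq: "4 * s + tj j + 1 = 4 * s / al j" by (simp add: tj_def)
    have a1_eq: "4 * s / \<alpha>1 = 4 * s + \<theta>1 + 1" unfolding \<alpha>1_def using s0 th by simp
    have a2_eq: "4 * s / \<alpha>2 = 4 * s + \<theta>2 + 1" unfolding \<alpha>2_def using s0 th by simp
    have tj_rng: "\<theta>1 \<le> tj j" "tj j \<le> \<theta>2"
    proof -
      have "4 * s / \<alpha>1 \<le> 4 * s / al j" using al_rng alpos s0 by (intro divide_left_mono) auto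
      then show "\<theta>1 \<le> tj j" using a1_eq tj_eq by linarith
      have "4 * s / al j \<le> 4 * s / \<alpha>2" using al_rng a2pos s0 by (intro divide_left_mono) auto
      then show "tj j \<le> \<theta>2" using a2_eq tj_eq by linarith
    qed
    have tjpos: "0 < tj j" using tj_rng th by simp
    have alpha_tj: "4 * s / (4 * s + tj j + 1) = al j" unfolding tj_eq using alpos s0 by simp
    have tA: "(tj j + 1) * al j = 4 * s * (1 - al j)"
    proof -
      have "(tj j + 1) * al j = (4 * s / al j - 4 * s) * al j" by (simp add: tj_def)
      also have "\<dots> = 4 * s * (1 - al j)" using alpos by (simp add: algebra_simps)
      finally show ?thesis .
    qed
    have sqrtD: "sqrt D = exp (ln D / 2)"
      using Dpos by (simp add: powr_half_sqrt[symmetric] powr_def)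
    have Npow: "N powr (al j) = N / sqrt D"
    proof -
      have "N powr (al j) = exp (al j * lN)" using N by (simp add: powr_def lN_def)
      also have "al j * lN = lN - ln D / 2" using lN unfolding alD by (simp add: field_simps)
      also have "exp (lN - ln D / 2) = N / sqrt D" using N by (simp add: exp_diff sqrtD lN_def)
      finally show ?thesis .
    qed
    have sD: "N powr (1 - \<alpha>1) \<le> sqrt D" "sqrt D \<le> N powr (1 - \<alpha>2)"
    proof -
      have e: "sqrt (N powr (2 - 2*x)) = N powr (1 - x)" for x
      proof -
        have "sqrt (N powr (2 - 2*x)) = N powr ((2 - 2*x) / 2)" using N by (simp add: powr_half_sqrt_powr)
        also have "(2 - 2*x) / 2 = 1 - x" by simp
        finally show ?thesis .
      qed
      show "N powr (1 - \<alpha>1) \<le> sqrt D" using Jj(1) e[of \<alpha>1] by (metis real_sqrt_le_mono)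
      show "sqrt D \<le> N powr (1 - \<alpha>2)" using Jj(2) e[of \<alpha>2] by (metis real_sqrt_le_mono)
    qed
    have sDpos: "0 < sqrt D" using Dpos by simp
    have a2: "(a j)^2 = Cb / (N * sqrt D)" unfolding a_def D_def using Cb N by simp
    have apos: "0 < a j" unfolding a_def using Cb N by simp
    have aD: "(a j)^2 * D = Cb * sqrt D / N"
    proof -
      have "(a j)^2 * D = Cb / (N * sqrt D) * D" by (simp add: a2)
      also have "\<dots> = Cb / (N * sqrt D) * (sqrt D * sqrt D)" using Dpos by simp
      also have "\<dots> = Cb * sqrt D / N" using sDpos N by (simp add: field_simps)
      finally show ?thesis .
    qed
    have aDD: "((a j) * D * Bp)^2 \<le> 1"
    proof -
      have "((a j) * D * Bp)^2 = Cb * (sqrt D * D) / N * Bp^2"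
        using aD by (simp add: power_mult_distrib power2_eq_square mult_ac)
      also have "sqrt D * D \<le> N powr (1 - \<alpha>2) * N powr (2 - 2*\<alpha>2)"
        using sD Jj Dpos by (intro mult_mono) auto
      also have "N powr (1 - \<alpha>2) * N powr (2 - 2*\<alpha>2) = N powr (2 - 3*\<alpha>2) * N"
      proof -
        have "N powr (1 - \<alpha>2) * N powr (2 - 2*\<alpha>2) = N powr ((1 - \<alpha>2) + (2 - 2*\<alpha>2))" by (simp only: powr_add)
        also have "(1 - \<alpha>2) + (2 - 2*\<alpha>2) = (2 - 3*\<alpha>2) + 1" by simp
        also have "N powr ((2 - 3*\<alpha>2) + 1) = N powr (2 - 3*\<alpha>2) * N powr 1" by (simp only: powr_add)
        finally show ?thesis using N by simp
      qed
      finally have "((a j) * D * Bp)^2 \<le> Cb * (N powr (2 - 3*\<alpha>2) * N) / N * Bp^2"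
        using Cb N by (simp add: divide_right_mono mult_right_mono mult_left_mono)
      also have "\<dots> = Cb * N powr (2 - 3*\<alpha>2) * Bp^2" using N by simp
      also have "\<dots> \<le> 1" using e2 unfolding \<alpha>2_def .
      finally show ?thesis .
    qed
    have small: "\<bar>a j\<bar> * real (card (Bl j)) * Bp \<le> 1"
    proof -
      have "\<bar>(a j) * D * Bp\<bar> \<le> 1" using aDD by (simp add: abs_square_le_1)
      then show ?thesis using apos Dpos Bp1 cardB by (simp add: abs_mult)
    qed
    have aD1: "(a j)^2 * real (card (Bl j)) \<le> 1"
    proof -
      have "(a j)^2 * D \<le> (a j)^2 * D * (D * Bp^2)"
      proof -
        have "1 \<le> D * Bp^2" using D1 Bp1 by (metis mult_mono' one_le_power mult_1 zero_le_one)
        moreover have "0 \<le> (a j)^2 * D" using Dpos by simp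
        ultimately show ?thesis by (metis mult_le_cancel_left1 mult.assoc mult_left_mono mult_1_right)
      qed
      also have "\<dots> = ((a j) * D * Bp)^2" by (simp add: power_mult_distrib power2_eq_square)
      finally show ?thesis using aDD cardB by simp
    qed
    have na_eq: "real n * (a j)^2 = Cb * sqrt L / sqrt D"
      unfolding a2 nNL using N sDpos by (simp add: field_simps)
    have na: "real n * (a j)^2 \<le> 1"
    proof -
      have "Cb * sqrt L / sqrt D \<le> Cb * sqrt L / N powr (1 - \<alpha>1)"
        using sD(1) Cb L N sDpos by (intro divide_left_mono) auto
      also have "\<dots> = Cb * sqrt L * N powr (\<alpha>1 - 1)"
        using N by (simp add: powr_minus[symmetric] divide_inverse)
      also have "\<dots> \<le> 1" using e3 unfolding \<alpha>1_def .
      finally show ?thesis unfolding na_eq .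
    qed
    have DnA: "real (card (Bl j)) * (real n * (a j)^2)^2 = Cb^2 * L"
      unfolding cardB na_eq using L sDpos Dpos by (simp add: power_divide power_mult_distrib)
    define Nb where "Nb = (a j)^2 * D * (2 * D) powr (2 * s) / cl"
    have Nb: "(\<Sum>k\<in>Bl j. (a j)^2 / lam k) \<le> Nb"
    proof -
      have "(\<Sum>k\<in>Bl j. (a j)^2 / lam k) \<le> (\<Sum>k\<in>Bl j. (a j)^2 * ((2 * D) powr (2 * s) / cl))"
      proof (intro sum_mono)
        fix k assume k: "k \<in> Bl j"
        have "Suc k \<le> 2^(Suc j)" using k by (simp add: Bl_def)
        then have "real (Suc k) \<le> 2 * D" unfolding D_def by (metis of_nat_le_iff of_nat_numeral of_nat_power power_Suc)
        then have "(real (Suc k)) powr (2 * s) \<le> (2 * D) powr (2 * s)" using s0 by (intro powr_mono2) auto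
        moreover have "1 / lam k \<le> (real (Suc k)) powr (2 * s) / cl"
          using cl(2)[of k] lam[of k] cl(1) by (simp add: divide_simps mult.commute)
        ultimately have "1 / lam k \<le> (2 * D) powr (2 * s) / cl" using cl(1) by (smt (verit) divide_right_mono)
        then show "(a j)^2 / lam k \<le> (a j)^2 * ((2 * D) powr (2 * s) / cl)"
          by (metis divide_inverse inverse_eq_divide mult_left_mono zero_le_power2)
      qed
      also have "\<dots> = Nb" unfolding Nb_def using cardB by simp
      finally show ?thesis .
    qed
    have cond: "sqrt ((a j)^2 * real (card (Bl j))) \<le> Mc * (sqrt Nb) powr (-1 / tj j)"
    proof -
      define X where "X = ln Cb"
      define t where "t = tj j"
      define A where "A = al j"
      have tpos: "0 < t" using tjpos by (simp add: t_def)
      have rho2: "(a j)^2 * real (card (Bl j)) = Cb * sqrt D / N" using aD cardB by simp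
      have rpos: "0 < Cb * sqrt D / N" using Cb sDpos N by simp
      have ln_r: "ln (Cb * sqrt D / N) = X - A * lN"
      proof -
        have "ln (Cb * sqrt D / N) = ln Cb + ln (sqrt D) - ln N"
          using Cb sDpos N by (simp add: ln_divide_pos ln_mult)
        also have "ln (sqrt D) = ln D / 2" using Dpos by (simp add: ln_sqrt)
        finally show ?thesis unfolding X_def A_def lnD_eq lN_def by (simp add: field_simps)
      qed
      have Nb_eq: "Nb = (Cb * sqrt D / N) * (2 * D) powr (2 * s) / cl" unfolding Nb_def aD ..
      have Nbpos: "0 < Nb" unfolding Nb_eq using rpos cl(1) Dpos Cb(1) N by (intro divide_pos_pos mult_pos_pos) auto
      have ln_Nb: "ln Nb = X - A * lN + 2 * s * (ln 2 + 2 * (1 - A) * lN) - ln cl"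
      proof -
        have p1: "0 < (2 * D) powr (2 * s)" using Dpos by simp
        have "ln Nb = ln ((Cb * sqrt D / N) * (2 * D) powr (2 * s)) - ln cl"
          unfolding Nb_eq using rpos p1 cl(1) by (intro ln_divide_pos mult_pos_pos)
        also have "ln ((Cb * sqrt D / N) * (2 * D) powr (2 * s)) = ln (Cb * sqrt D / N) + ln ((2 * D) powr (2 * s))"
          using rpos p1 by (rule ln_mult_pos)
        also have "ln ((2 * D) powr (2 * s)) = 2 * s * (ln 2 + ln D)"
          using Dpos by (simp add: ln_mult_pos)
        finally show ?thesis unfolding ln_r lnD_eq A_def by simp
      qed
      have lhs: "ln (sqrt ((a j)^2 * real (card (Bl j)))) = (X - A * lN) / 2"
        unfolding rho2 using rpos by (simp add: ln_sqrt ln_r)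
      have rhs: "ln (Mc * (sqrt Nb) powr (-1 / t)) = ln Mc - (ln Nb / 2) / t"
        using Mc Nbpos by (simp add: ln_mult ln_sqrt)
      have tA': "(t + 1) * A = 4 * s * (1 - A)" using tA by (simp add: t_def A_def)
      have X0: "X \<le> 0" unfolding X_def using Cb by simp
      have "(t + 1) * X \<le> (\<theta>1 + 1) * X"
        using X0 tj_rng by (intro mult_right_mono_neg) (auto simp: t_def)
      also have "(\<theta>1 + 1) * X \<le> ln cl - 2 * s * ln 2 - 2 * \<theta>2 * \<bar>ln Mc\<bar>"
      proof -
        have "(\<theta>1 + 1) * X \<le> (\<theta>1 + 1) * ((2/(\<theta>1+1)) * (ln cl / 2 - s * ln 2 - \<theta>2 * \<bar>ln Mc\<bar>))"
          using Cb(3) th by (intro mult_left_mono) (auto simp: X_def)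
        also have "\<dots> = ln cl - 2 * s * ln 2 - 2 * \<theta>2 * \<bar>ln Mc\<bar>" using th by (simp add: field_simps)
        finally show ?thesis .
      qed
      finally have k1: "(t + 1) * X \<le> ln cl - 2 * s * ln 2 - 2 * \<theta>2 * \<bar>ln Mc\<bar>" .
      have k2: "- (\<theta>2 * \<bar>ln Mc\<bar>) \<le> t * ln Mc"
      proof -
        have "- (\<theta>2 * \<bar>ln Mc\<bar>) \<le> - (t * \<bar>ln Mc\<bar>)" using tj_rng by (simp add: t_def mult_right_mono)
        also have "\<dots> \<le> t * ln Mc" using tpos by (simp add: abs_if mult_right_mono_neg)
        finally show ?thesis .
      qed
      have expand: "t * (X - A * lN) + ln Nb = (t + 1) * X + 2 * s * ln 2 - ln cl + (4 * s * (1 - A) * lN - (t + 1) * A * lN)"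
        unfolding ln_Nb by (simp add: algebra_simps)
      have "t * (X - A * lN) + ln Nb \<le> 2 * t * ln Mc"
        using k1 k2 unfolding expand tA' by simp
      then have "(X - A * lN) / 2 \<le> ln Mc - (ln Nb / 2) / t"
        using tpos by (simp add: field_simps)
      then have "ln (sqrt ((a j)^2 * real (card (Bl j)))) \<le> ln (Mc * (sqrt Nb) powr (-1 / t))"
        unfolding lhs rhs .
      moreover have "0 < sqrt ((a j)^2 * real (card (Bl j)))" unfolding rho2 using rpos by simp
      moreover have "0 < Mc * (sqrt Nb) powr (-1 / t)" using Mc Nbpos by simp
      ultimately show ?thesis by (simp add: t_def)
    qed
    have Dlt: "\<Delta> (tj j) \<le> (a j)^2 * real (card (Bl j))"
    proof -
      have "\<Delta> (tj j) * N powr (al j) \<le> Cb" using Dl[of "tj j"] tj_rng alpha_tj by simp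
      then have "\<Delta> (tj j) * (N / sqrt D) \<le> Cb" unfolding Npow .
      then have "\<Delta> (tj j) \<le> Cb * sqrt D / N" using N sDpos by (simp add: field_simps)
      then show ?thesis using aD cardB by simp
    qed
    have Palt: "density P0 (\<lambda>x. ennreal (1 + bfun ph (a j) (Bl j) \<xi> x)) \<in> Palt P0 lam ph (\<Delta> (tj j)) (tj j) Mc"
    proof -
      have a0: "a j \<noteq> 0" using apos by simp
      show ?thesis by (rule bfun_Palt[OF Bl_fin Bl_ne xi small a0 lam Nb tjpos Mc cond Dlt])
    qed
    show ?thesis using tj_rng small apos aD1 na DnA Palt by simp
  qed
  define Pj where "Pj j = PiE (Bl j) (\<lambda>_. {-1,1::real})" for j
  define S where "S = Sigma J Pj"
  define q where "q j (\<xi>::nat \<Rightarrow> real) = (1::real) / 2^(card (Bl j))" for j \<xi>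
  define w where "w st = q (fst st) (snd st) / real (card J)" for st
  define u where "u st = bfun ph (a (fst st)) (Bl (fst st)) (snd st)" for st
  define F where "F j \<xi> j' \<xi>' = (1 + (\<integral>x. bfun ph (a j) (Bl j) \<xi> x * bfun ph (a j') (Bl j') \<xi>' x \<partial>P0))^n"
    for j \<xi> j' \<xi>'
  define E where "E = exp (Cb^2 * L)"
  have m0: "0 < card J" using Jfin Jne by (simp add: card_gt_0_iff)
  have Pj_fin: "finite (Pj j)" for j unfolding Pj_def using Bl_fin by (simp add: finite_PiE)
  have Pj_card: "card (Pj j) = 2 ^ card (Bl j)" for j
    unfolding Pj_def using Bl_fin by (simp add: card_PiE) (metis numeral_2_eq_2)
  have Pj_xi: "\<And>k. k \<in> Bl j \<Longrightarrow> \<xi> k \<in> {-1,1}" if "\<xi> \<in> Pj j" for j \<xi>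
    using that unfolding Pj_def by (auto simp: PiE_def Pi_def)
  have Sfin: "finite S" unfolding S_def using Jfin Pj_fin by simp
  have q1: "(\<Sum>\<xi>\<in>Pj j. q j \<xi>) = 1" for j
    unfolding q_def using Pj_card by simp
  have wsum: "sum w S = 1"
  proof -
    have "sum w S = (\<Sum>j\<in>J. \<Sum>\<xi>\<in>Pj j. q j \<xi> / card J)"
      unfolding S_def w_def using Jfin Pj_fin by (simp add: sum_Sigma')
    also have "\<dots> = (\<Sum>j\<in>J. 1 / card J)" using q1 by (simp add: sum_divide_distrib[symmetric])
    also have "\<dots> = 1" using m0 by simp
    finally show ?thesis .
  qed
  have w0: "0 \<le> w st" for st unfolding w_def q_def by simp
  have uprops: "u st \<in> borel_measurable P0 \<and> (\<forall>x. \<bar>u st x\<bar> \<le> 1) \<and> (\<integral>x. u st x \<partial>P0) = 0" if "st \<in> S" for st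
  proof -
    have j: "fst st \<in> J" and xi: "snd st \<in> Pj (fst st)" using that by (auto simp: S_def)
    have small: "\<bar>a (fst st)\<bar> * real (card (Bl (fst st))) * Bp \<le> 1" using jfacts[where j="fst st" and \<xi>="snd st", OF j Pj_xi[OF xi]] by blast
    show ?thesis unfolding u_def
      using bfun_bdd bfun_int0[OF Bl_fin Pj_xi[OF xi] small] by auto
  qed
  have Tm: "T \<in> borel_measurable (PiM {..<n} (\<lambda>_. P0))" and Tb: "\<And>x. x \<in> space (PiM {..<n} (\<lambda>_. P0)) \<Longrightarrow> 0 \<le> T x \<and> T x \<le> 1"
    using T unfolding tests_def by auto
  have chi: "1 - sqrt ((\<Sum>s\<in>S. \<Sum>t\<in>S. w s * w t * (1 + (\<integral>x. u s x * u t x \<partial>P0))^n) - 1)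
         \<le> (\<integral>x. T x \<partial>PiM {..<n} (\<lambda>_. P0)) +
            (\<Sum>s\<in>S. w s * (\<integral>x. 1 - T x \<partial>PiM {..<n} (\<lambda>_. density P0 (\<lambda>x. ennreal (1 + u s x)))))"
    by (rule chi2_lb[OF P0 Sfin w0 wsum _ _ _ Tm Tb]) (use uprops in auto)
  have DS: "(\<Sum>s\<in>S. \<Sum>t\<in>S. w s * w t * (1 + (\<integral>x. u s x * u t x \<partial>P0))^n) \<le> E / card J + (real (card J) - 1) / card J"
  proof -
    have "(\<Sum>s\<in>S. \<Sum>t\<in>S. w s * w t * (1 + (\<integral>x. u s x * u t x \<partial>P0))^n)
       = (\<Sum>s\<in>Sigma J Pj. \<Sum>t\<in>Sigma J Pj. (q (fst s) (snd s) / card J) * (q (fst t) (snd t) / card J) * F (fst s) (snd s) (fst t) (snd t))"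
      unfolding S_def w_def u_def F_def ..
    also have "\<dots> \<le> E / card J + (real (card J) - 1) / card J"
    proof (rule double_mix_bound[OF Jfin Jne Pj_fin q1])
      fix j j' \<xi> \<xi>' assume jj: "j \<in> J" "j' \<in> J" "j \<noteq> j'" "\<xi> \<in> Pj j" "\<xi>' \<in> Pj j'"
      have sm: "\<bar>a j\<bar> * real (card (Bl j)) * Bp \<le> 1" using jfacts[where j=j and \<xi>=\<xi>, OF jj(1) Pj_xi[OF jj(4)]] by blast
      have sm': "\<bar>a j'\<bar> * real (card (Bl j')) * Bp \<le> 1" using jfacts[where j=j' and \<xi>=\<xi>', OF jj(2) Pj_xi[OF jj(5)]] by blast
      show "F j \<xi> j' \<xi>' = 1" unfolding F_def
        using bfun_int_bfun[OF Bl_fin Pj_xi[OF jj(4)] sm Bl_fin Pj_xi[OF jj(5)] sm'] Bl_disj[OF jj(3)] by simp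
    next
      fix j assume j: "j \<in> J"
      obtain \<xi>0 where "\<xi>0 \<in> Pj j" using Pj_card by (metis card.empty ex_in_conv power_not_zero zero_neq_numeral)
      have jf: "(a j)^2 * real (card (Bl j)) \<le> 1 \<and> real n * (a j)^2 \<le> 1 \<and> real (card (Bl j)) * (real n * (a j)^2)^2 = Cb^2 * L"
        using jfacts[where j=j and \<xi>=\<xi>0, OF j Pj_xi[OF \<open>\<xi>0 \<in> Pj j\<close>]] by blast
      have Feq: "F j \<xi> j \<xi>' = (1 + (a j)^2 * (\<Sum>k\<in>Bl j. \<xi> k * \<xi>' k))^n" if "\<xi> \<in> Pj j" "\<xi>' \<in> Pj j" for \<xi> \<xi>'
      proof -
        have sm: "\<bar>a j\<bar> * real (card (Bl j)) * Bp \<le> 1" using jfacts[where j=j and \<xi>=\<xi>, OF j Pj_xi[OF that(1)]] by blast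
        show ?thesis unfolding F_def
          using bfun_int_bfun[OF Bl_fin Pj_xi[OF that(1)] sm Bl_fin Pj_xi[OF that(2)] sm] by (simp add: power2_eq_square)
      qed
      have "(\<Sum>\<xi>\<in>Pj j. \<Sum>\<xi>'\<in>Pj j. q j \<xi> * q j \<xi>' * F j \<xi> j \<xi>')
          = (\<Sum>\<xi>\<in>Pj j. \<Sum>\<xi>'\<in>Pj j. (1 / 2 ^ card (Bl j)) * (1 / 2 ^ card (Bl j)) * (1 + (a j)^2 * (\<Sum>k\<in>Bl j. \<xi> k * \<xi>' k))^n)"
        using Feq by (intro sum.cong refl) (simp add: q_def)
      also have "\<dots> \<le> exp (real (card (Bl j)) * (real n * (a j)^2)^2)"
        unfolding Pj_def using jf by (intro rad_bound Bl_fin) auto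
      also have "\<dots> = E" using jf by (simp add: E_def)
      finally show "(\<Sum>\<xi>\<in>Pj j. \<Sum>\<xi>'\<in>Pj j. q j \<xi> * q j \<xi>' * F j \<xi> j \<xi>') \<le> E" .
    qed
    finally show ?thesis .
  qed
  have sq: "sqrt ((\<Sum>s\<in>S. \<Sum>t\<in>S. w s * w t * (1 + (\<integral>x. u s x * u t x \<partial>P0))^n) - 1) \<le> sqrt ((E - 1) / card J)"
  proof (rule real_sqrt_le_mono)
    have "E / card J + (real (card J) - 1) / card J - 1 = (E - 1) / card J" using m0 by (simp add: field_simps)
    then show "(\<Sum>s\<in>S. \<Sum>t\<in>S. w s * w t * (1 + (\<integral>x. u s x * u t x \<partial>P0))^n) - 1 \<le> (E - 1) / card J"
      using DS by linarith
  qed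
  have bddT: "bdd_above ((\<lambda>\<theta>. type2 P0 lam ph n T (\<Delta> \<theta>) \<theta> Mc) ` {\<theta>1..\<theta>2})"
    using type2_le1(1)[OF T] by (intro bdd_aboveI[where M=1]) auto
  have rhs: "(\<Sum>s\<in>S. w s * (\<integral>x. 1 - T x \<partial>PiM {..<n} (\<lambda>_. density P0 (\<lambda>x. ennreal (1 + u s x)))))
      \<le> (SUP \<theta>\<in>{\<theta>1..\<theta>2}. type2 P0 lam ph n T (\<Delta> \<theta>) \<theta> Mc)"
  proof -
    have "(\<Sum>s\<in>S. w s * (\<integral>x. 1 - T x \<partial>PiM {..<n} (\<lambda>_. density P0 (\<lambda>x. ennreal (1 + u s x)))))
        \<le> (\<Sum>s\<in>S. w s * (SUP \<theta>\<in>{\<theta>1..\<theta>2}. type2 P0 lam ph n T (\<Delta> \<theta>) \<theta> Mc))"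
    proof (intro sum_mono mult_left_mono w0)
      fix st assume st: "st \<in> S"
      have j: "fst st \<in> J" and xi: "snd st \<in> Pj (fst st)" using st by (auto simp: S_def)
      have jf: "tj (fst st) \<in> {\<theta>1..\<theta>2} \<and> density P0 (\<lambda>x. ennreal (1 + bfun ph (a (fst st)) (Bl (fst st)) (snd st) x)) \<in> Palt P0 lam ph (\<Delta> (tj (fst st))) (tj (fst st)) Mc"
        using jfacts[where j="fst st" and \<xi>="snd st", OF j Pj_xi[OF xi]] by blast
      have "(\<integral>x. 1 - T x \<partial>PiM {..<n} (\<lambda>_. density P0 (\<lambda>x. ennreal (1 + u st x)))) \<le> type2 P0 lam ph n T (\<Delta> (tj (fst st))) (tj (fst st)) Mc"
        unfolding u_def using jf by (intro type2_ge[OF T]) auto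
      also have "\<dots> \<le> (SUP \<theta>\<in>{\<theta>1..\<theta>2}. type2 P0 lam ph n T (\<Delta> \<theta>) \<theta> Mc)"
        using jf bddT by (intro cSUP_upper) auto
      finally show "(\<integral>x. 1 - T x \<partial>PiM {..<n} (\<lambda>_. density P0 (\<lambda>x. ennreal (1 + u st x)))) \<le> (SUP \<theta>\<in>{\<theta>1..\<theta>2}. type2 P0 lam ph n T (\<Delta> \<theta>) \<theta> Mc)" .
    qed
    also have "\<dots> = (SUP \<theta>\<in>{\<theta>1..\<theta>2}. type2 P0 lam ph n T (\<Delta> \<theta>) \<theta> Mc)"
      using wsum by (simp add: sum_distrib_right[symmetric])
    finally show ?thesis .
  qed
  show ?thesis using chi sq rhs unfolding E_def by linarith
qed

end

lemma AS1: "(b::real) < 0 \<Longrightarrow> ((\<lambda>n::nat. (real n / sqrt (ln (ln (real n)))) powr b) \<longlongrightarrow> 0) at_top"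
  by real_asymp
lemma AS2: "(a::real) < 1 \<Longrightarrow> ((\<lambda>n::nat. sqrt (ln (ln (real n))) * (real n / sqrt (ln (ln (real n)))) powr (a - 1)) \<longlongrightarrow> 0) at_top"
  by real_asymp
lemma AS3: "0 < (k::real) \<Longrightarrow> ((\<lambda>n::nat. exp (ln (ln (real n)) / 4) / (k * log 2 (real n / sqrt (ln (ln (real n)))) - 1)) \<longlongrightarrow> 0) at_top"
  by real_asymp
lemma AS4: "filterlim (\<lambda>n::nat. real n / sqrt (ln (ln (real n)))) at_top at_top"
  by real_asymp
lemma AS5: "filterlim (\<lambda>n::nat. ln (ln (real n))) at_top at_top"
  by real_asymp
lemma AS6: "0 < (k::real) \<Longrightarrow> filterlim (\<lambda>n::nat. k * log 2 (real n / sqrt (ln (ln (real n)))) - 1) at_top at_top"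
  by real_asymp

lemma count_J:
  fixes lo hi :: real
  assumes lo: "1 \<le> lo" and hi: "0 < hi"
  shows "finite {j::nat. lo \<le> 2^j \<and> 2^j \<le> hi}"
    "log 2 hi - log 2 lo - 1 \<le> real (card {j::nat. lo \<le> 2^j \<and> 2^j \<le> hi})"
proof -
  define Jx where "Jx = {j::nat. lo \<le> 2^j \<and> 2^j \<le> hi}"
  show fin: "finite {j::nat. lo \<le> 2^j \<and> 2^j \<le> hi}"
  proof (rule finite_subset)
    show "{j::nat. lo \<le> 2^j \<and> 2^j \<le> hi} \<subseteq> {..nat \<lceil>hi\<rceil>}"
    proof
      fix j assume "j \<in> {j::nat. lo \<le> 2^j \<and> 2^j \<le> hi}"
      then have "2^j \<le> hi" by auto
      moreover have "real j < 2^j"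
      proof -
        have "j < 2^j" by (rule less_exp)
        then have "real j < real (2^j)" by (simp only: of_nat_less_iff)
        then show ?thesis by simp
      qed
      ultimately have "real j \<le> \<lceil>hi\<rceil>" by linarith
      then have "int j \<le> \<lceil>hi\<rceil>" by linarith
      then show "j \<in> {..nat \<lceil>hi\<rceil>}" by simp
    qed
  qed simp
  show "log 2 hi - log 2 lo - 1 \<le> real (card {j::nat. lo \<le> 2^j \<and> 2^j \<le> hi})"
  proof (cases "log 2 hi - log 2 lo - 1 \<le> 0")
    case True then show ?thesis by simp
  next
    case False
    have llo: "0 \<le> log 2 lo" using lo by simp
    define a where "a = nat \<lceil>log 2 lo\<rceil>"
    define b where "b = nat \<lfloor>log 2 hi\<rfloor>"
    have a_eq: "real a = \<lceil>log 2 lo\<rceil>" unfolding a_def using llo by simp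
    have hpos: "0 \<le> \<lfloor>log 2 hi\<rfloor>" using False llo by simp
    have b_eq: "real b = \<lfloor>log 2 hi\<rfloor>" unfolding b_def using hpos by simp
    have sub: "{a..b} \<subseteq> Jx"
    proof
      fix j assume j: "j \<in> {a..b}"
      have "log 2 lo \<le> real j" using j a_eq by (smt (verit) atLeastAtMost_iff ceiling_correct of_nat_le_iff)
      then have "2 powr log 2 lo \<le> 2 powr real j" by simp
      then have l: "lo \<le> 2^j" using lo by (simp add: powr_realpow)
      have "real j \<le> log 2 hi" using j b_eq by (smt (verit) atLeastAtMost_iff of_int_floor_le of_nat_le_iff)
      then have "2 powr real j \<le> 2 powr log 2 hi" by simp
      then have h: "2^j \<le> hi" using hi by (simp add: powr_realpow)
      show "j \<in> Jx" using l h by (simp add: Jx_def)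
    qed
    have "card {a..b} \<le> card Jx" using sub fin by (intro card_mono) (auto simp: Jx_def)
    moreover have "real (card {a..b}) \<ge> log 2 hi - log 2 lo - 1"
    proof -
      have "real (card {a..b}) = real (Suc b - a)" by simp
      also have "\<dots> \<ge> real b + 1 - real a" by linarith
      finally have c: "real (card {a..b}) \<ge> real b + 1 - real a" .
      have "real b > log 2 hi - 1" using b_eq by linarith
      moreover have "real a < log 2 lo + 1" using a_eq by linarith
      ultimately show ?thesis using c by linarith
    qed
    ultimately show ?thesis by (simp add: Jx_def)
  qed
qed

theorem theorem6:
  fixes P0 :: "'a measure" and K :: "'a \<Rightarrow> 'a \<Rightarrow> real"
    and lam :: "nat \<Rightarrow> real" and \<phi> :: "nat \<Rightarrow> 'a \<Rightarrow> real"
    and s Mc \<theta>1 \<theta>2 :: real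
  assumes P0: "prob_space P0"
    and K_meas: "(\<lambda>z. K (fst z) (snd z)) \<in> borel_measurable (P0 \<Otimes>\<^sub>M P0)"
    and K_sym: "\<forall>x y. K x y = K y x"
    and K_psd: "\<forall>(m::nat) (c::nat \<Rightarrow> real) (x::nat \<Rightarrow> 'a). (\<forall>i<m. x i \<in> space P0) \<longrightarrow>
                  0 \<le> (\<Sum>i<m. \<Sum>j<m. c i * c j * K (x i) (x j))"
    and K_sq: "integrable (P0 \<Otimes>\<^sub>M P0) (\<lambda>z. (K (fst z) (snd z))^2)"
    and K_degen: "AE x in P0. (\<integral>y. K x y \<partial>P0) = 0"
    and K_mercer: "AE z in P0 \<Otimes>\<^sub>M P0. K (fst z) (snd z) = (\<Sum>k. lam k * \<phi> k (fst z) * \<phi> k (snd z))"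
    and lam_pos: "\<forall>k. 0 < lam k"
    and lam_dec: "\<forall>k. lam (Suc k) < lam k"
    and lam_liminf: "0 < liminf (\<lambda>k. ereal ((real (Suc k)) powr (2 * s) * lam k))"
    and lam_limsup: "limsup (\<lambda>k. ereal ((real (Suc k)) powr (2 * s) * lam k)) < \<infinity>"
    and phi_meas: "\<forall>k. \<phi> k \<in> borel_measurable P0"
    and phi_bdd: "\<exists>B. \<forall>k. AE x in P0. \<bar>\<phi> k x\<bar> \<le> B"
    and phi_orth: "\<forall>j k. (\<integral>x. \<phi> j x * \<phi> k x \<partial>P0) = (if j = k then 1 else 0)"
    and phi_mean0: "\<forall>k. (\<integral>x. \<phi> k x \<partial>P0) = 0"
    and phi_complete: "\<forall>f \<in> L2 P0. (\<integral>x. f x \<partial>P0) = 0 \<longrightarrow> (\<forall>k. coef P0 \<phi> f k = 0) \<longrightarrow>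
                          (AE x in P0. f x = 0)"
    and s: "s > 1/2"
    and Mc: "Mc > 0"
    and th: "0 < \<theta>1" "\<theta>1 < \<theta>2" "\<theta>2 < 2 * s - 1"
  shows "\<exists>c2>0. \<forall>\<Delta> :: nat \<Rightarrow> real \<Rightarrow> real.
     limsup (\<lambda>n. SUP \<theta>\<in>{\<theta>1..\<theta>2}. ereal (\<Delta> n \<theta> *
         (real n / sqrt (ln (ln (real n)))) powr (4 * s / (4 * s + \<theta> + 1)))) \<le> ereal c2 \<longrightarrow>
     (\<lambda>n. INF T\<in>tests P0 n. (\<integral>x. T x \<partial>(PiM {..<n} (\<lambda>_. P0)))
          + (SUP \<theta>\<in>{\<theta>1..\<theta>2}. type2 P0 lam \<phi> n T (\<Delta> n \<theta>) \<theta> Mc)) \<longlonglongrightarrow> 1"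
proof -
  obtain cl where cl0: "0 < cl" and clk: "\<And>k. cl \<le> ((real (Suc k)) powr (2 * s)) * lam k"
    using lam_lower[OF lam_pos lam_liminf] by blast
  obtain B0 where B0: "\<forall>k. AE x in P0. \<bar>\<phi> k x\<bar> \<le> B0" using phi_bdd by blast
  define Bp where "Bp = max B0 1"
  have Bp1: "1 \<le> Bp" by (simp add: Bp_def)
  have phB: "\<And>k. AE x in P0. \<bar>\<phi> k x\<bar> \<le> Bp"
  proof -
    fix k
    have "AE x in P0. \<bar>\<phi> k x\<bar> \<le> B0" using B0 by blast
    then show "AE x in P0. \<bar>\<phi> k x\<bar> \<le> Bp" by eventually_elim (simp add: Bp_def)
  qed
  have PSax: "phisys P0 \<phi> Bp" unfolding phisys_def using P0 phi_meas phB phi_orth phi_mean0 by blast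
  interpret PS: phisys P0 \<phi> Bp by (rule PSax)
  have lam': "\<And>k. 0 < lam k" using lam_pos by blast
  define \<Lambda> where "\<Lambda> = (2/(\<theta>1+1)) * (ln cl / 2 - s * ln 2 - \<theta>2 * \<bar>ln Mc\<bar>)"
  define Cb where "Cb = min (1/2) (exp \<Lambda>)"
  have Cb0: "0 < Cb" and Cb1: "Cb \<le> 1/2" unfolding Cb_def by auto
  have Cb2: "ln Cb \<le> \<Lambda>"
  proof -
    have "Cb \<le> exp \<Lambda>" unfolding Cb_def by simp
    then have "ln Cb \<le> ln (exp \<Lambda>)" using Cb0 by (subst ln_le_cancel_iff) auto
    then show ?thesis by simp
  qed
  define c2 where "c2 = Cb / 2"
  show ?thesis
  proof (intro exI[of _ c2] conjI allI impI)
    show "0 < c2" using Cb0 by (simp add: c2_def)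
    fix \<Delta> :: "nat \<Rightarrow> real \<Rightarrow> real"
    assume hyp: "limsup (\<lambda>n. SUP \<theta>\<in>{\<theta>1..\<theta>2}. ereal (\<Delta> n \<theta> *
         (real n / sqrt (ln (ln (real n)))) powr (4 * s / (4 * s + \<theta> + 1)))) \<le> ereal c2"
    define Nf where "Nf n = real n / sqrt (ln (ln (real n)))" for n :: nat
    define Lf where "Lf n = ln (ln (real n))" for n :: nat
    define \<alpha>1 where "\<alpha>1 = 4 * s / (4 * s + \<theta>1 + 1)"
    define \<alpha>2 where "\<alpha>2 = 4 * s / (4 * s + \<theta>2 + 1)"
    define \<kappa> where "\<kappa> = 2 * \<alpha>1 - 2 * \<alpha>2"
    define J where "J n = {j::nat. Nf n powr (2 - 2 * (4 * s / (4 * s + \<theta>1 + 1))) \<le> 2^j \<and> 2^j \<le> Nf n powr (2 - 2 * (4 * s / (4 * s + \<theta>2 + 1)))}" for n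
    define g where "g n = sqrt ((exp (Cb^2 * Lf n) - 1) / card (J n))" for n
    define h where "h n = exp (Lf n / 4) / (\<kappa> * log 2 (Nf n) - 1)" for n
    define f where "f n = (INF T\<in>tests P0 n. (\<integral>x. T x \<partial>(PiM {..<n} (\<lambda>_. P0)))
          + (SUP \<theta>\<in>{\<theta>1..\<theta>2}. type2 P0 lam \<phi> n T (\<Delta> n \<theta>) \<theta> Mc))" for n
    have s0: "0 < s" using s by simp
    have a2pos: "0 < \<alpha>2" using s0 th by (simp add: \<alpha>2_def)
    have a21: "\<alpha>2 < \<alpha>1" unfolding \<alpha>1_def \<alpha>2_def using s0 th
      by (intro divide_strict_left_mono) auto
    have a11: "\<alpha>1 < 1" unfolding \<alpha>1_def using s0 th by (simp add: divide_simps)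
    have a23: "2 - 3 * \<alpha>2 < 0"
    proof -
      have "2 * (4 * s + \<theta>2 + 1) < 3 * (4 * s)" using th(3) by (simp add: algebra_simps)
      then have "2 < 3 * (4 * s / (4 * s + \<theta>2 + 1))" using s0 th by (simp add: divide_simps)
      then show ?thesis by (simp add: \<alpha>2_def)
    qed
    have \<kappa>0: "0 < \<kappa>" using a21 by (simp add: \<kappa>_def)
    have evN: "eventually (\<lambda>n. 1 < Nf n) sequentially"
      using AS4 unfolding Nf_def filterlim_at_top_dense by auto
    have evL: "eventually (\<lambda>n. 0 < Lf n) sequentially"
      using AS5 unfolding Lf_def filterlim_at_top_dense by auto
    have evD: "eventually (\<lambda>n. \<forall>\<theta>\<in>{\<theta>1..\<theta>2}. \<Delta> n \<theta> * Nf n powr (4 * s / (4 * s + \<theta> + 1)) \<le> Cb) sequentially"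
    proof -
      have "limsup (\<lambda>n. SUP \<theta>\<in>{\<theta>1..\<theta>2}. ereal (\<Delta> n \<theta> *
         (real n / sqrt (ln (ln (real n)))) powr (4 * s / (4 * s + \<theta> + 1)))) < ereal Cb"
        using hyp by (rule le_less_trans) (use Cb0 in \<open>simp add: c2_def\<close>)
      then have "eventually (\<lambda>n. (SUP \<theta>\<in>{\<theta>1..\<theta>2}. ereal (\<Delta> n \<theta> *
         (real n / sqrt (ln (ln (real n)))) powr (4 * s / (4 * s + \<theta> + 1)))) < ereal Cb) sequentially"
        by (rule Limsup_lessD)
      then show ?thesis
      proof eventually_elim
        case (elim n)
        show ?case
        proof
          fix \<theta> assume "\<theta> \<in> {\<theta>1..\<theta>2}"
          then have "ereal (\<Delta> n \<theta> * (real n / sqrt (ln (ln (real n)))) powr (4 * s / (4 * s + \<theta> + 1))) < ereal Cb"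
            using elim by (meson SUP_upper le_less_trans)
          then show "\<Delta> n \<theta> * Nf n powr (4 * s / (4 * s + \<theta> + 1)) \<le> Cb" by (simp add: Nf_def)
        qed
      qed
    qed
    have ev2: "eventually (\<lambda>n. Cb * Nf n powr (2 - 3 * \<alpha>2) * Bp^2 \<le> 1) sequentially"
    proof -
      have "((\<lambda>n. (Cb * Bp^2) * Nf n powr (2 - 3 * \<alpha>2)) \<longlongrightarrow> (Cb * Bp^2) * 0) sequentially"
        unfolding Nf_def by (intro tendsto_mult tendsto_const AS1[OF a23])
      then have "eventually (\<lambda>n. (Cb * Bp^2) * Nf n powr (2 - 3 * \<alpha>2) < 1) sequentially"
        by (intro order_tendstoD(2)) auto
      then show ?thesis by eventually_elim (simp add: mult_ac)
    qed
    have ev3: "eventually (\<lambda>n. Cb * sqrt (Lf n) * Nf n powr (\<alpha>1 - 1) \<le> 1) sequentially"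
    proof -
      have "((\<lambda>n. Cb * (sqrt (Lf n) * Nf n powr (\<alpha>1 - 1))) \<longlongrightarrow> Cb * 0) sequentially"
        unfolding Nf_def Lf_def by (intro tendsto_mult tendsto_const AS2[OF a11])
      then have "eventually (\<lambda>n. Cb * (sqrt (Lf n) * Nf n powr (\<alpha>1 - 1)) < 1) sequentially"
        by (intro order_tendstoD(2)) auto
      then show ?thesis by eventually_elim (simp add: mult_ac)
    qed
    have ev6: "eventually (\<lambda>n. 0 < \<kappa> * log 2 (Nf n) - 1) sequentially"
    proof -
      have "\<forall>Z. eventually (\<lambda>x. Z < \<kappa> * log 2 (Nf x) - 1) sequentially"
        using AS6[OF \<kappa>0] unfolding Nf_def filterlim_at_top_dense by blast
      then show ?thesis by blast
    qed
    have good: "eventually (\<lambda>n. 1 - g n \<le> f n \<and> g n \<le> sqrt (h n)) sequentially"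
      using evN evL evD ev2 ev3 ev6
    proof eventually_elim
      case (elim n)
      have N1: "1 < Nf n" and L0: "0 < Lf n" using elim by auto
      have lo1: "1 \<le> Nf n powr (2 - 2 * \<alpha>1)" using N1 a11 by (intro ge_one_powr_ge_zero) auto
      have hi0: "0 < Nf n powr (2 - 2 * \<alpha>2)" using N1 by simp
      have Jn: "J n = {j::nat. Nf n powr (2 - 2 * \<alpha>1) \<le> 2^j \<and> 2^j \<le> Nf n powr (2 - 2 * \<alpha>2)}"
        unfolding J_def \<alpha>1_def \<alpha>2_def ..
      have cnt: "log 2 (Nf n powr (2 - 2 * \<alpha>2)) - log 2 (Nf n powr (2 - 2 * \<alpha>1)) - 1 \<le> real (card (J n))"
        unfolding Jn by (rule count_J(2)[OF lo1 hi0])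
      have "log 2 (Nf n powr (2 - 2 * \<alpha>2)) - log 2 (Nf n powr (2 - 2 * \<alpha>1)) - 1 = \<kappa> * log 2 (Nf n) - 1"
        using N1 by (simp add: log_def \<kappa>_def field_simps)
      then have cnt': "\<kappa> * log 2 (Nf n) - 1 \<le> real (card (J n))" using cnt by simp
      have cpos: "0 < real (card (J n))" using cnt' elim by linarith
      then have Jne: "J n \<noteq> {}" by auto
      have nNL: "real n = Nf n * sqrt (Lf n)" unfolding Nf_def Lf_def using L0 by (simp add: Lf_def)
      have lower: "1 - g n \<le> (\<integral>x. T x \<partial>(PiM {..<n} (\<lambda>_. P0))) + (SUP \<theta>\<in>{\<theta>1..\<theta>2}. type2 P0 lam \<phi> n T (\<Delta> n \<theta>) \<theta> Mc)"
        if T: "T \<in> tests P0 n" for T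
        unfolding g_def
      proof (rule PS.lower_bound_n[OF lam' cl0 clk s Mc th Bp1 N1 L0 nNL Cb0 Cb1])
        show "ln Cb \<le> 2 / (\<theta>1 + 1) * (ln cl / 2 - s * ln 2 - \<theta>2 * \<bar>ln Mc\<bar>)" using Cb2 by (simp add: \<Lambda>_def)
        show "\<And>\<theta>. \<theta> \<in> {\<theta>1..\<theta>2} \<Longrightarrow> \<Delta> n \<theta> * Nf n powr (4 * s / (4 * s + \<theta> + 1)) \<le> Cb" using elim by blast
        show "Cb * Nf n powr (2 - 3 * (4 * s / (4 * s + \<theta>2 + 1))) * Bp^2 \<le> 1" using elim by (simp add: \<alpha>2_def)
        show "Cb * sqrt (Lf n) * Nf n powr (4 * s / (4 * s + \<theta>1 + 1) - 1) \<le> 1" using elim by (simp add: \<alpha>1_def)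
      qed (fact J_def[of n], fact Jne, fact T)
      have tne: "tests P0 n \<noteq> {}"
      proof -
        have "(\<lambda>_. 0) \<in> tests P0 n" unfolding tests_def by auto
        then show ?thesis by blast
      qed
      have fl: "1 - g n \<le> f n" unfolding f_def using tne lower by (intro cINF_greatest) auto
      have "(exp (Cb^2 * Lf n) - 1) / card (J n) \<le> h n"
      proof -
        have "Cb^2 \<le> (1/2)^2" using Cb0 Cb1 by (intro power_mono) auto
        then have "Cb^2 \<le> 1/4" by (simp add: power2_eq_square)
        then have "Cb^2 * Lf n \<le> Lf n / 4" using L0 by (simp add: mult_right_mono)
        then have e: "exp (Cb^2 * Lf n) - 1 \<le> exp (Lf n / 4)" by (smt (verit) exp_le_cancel_iff exp_gt_zero)
        have e0: "0 \<le> exp (Cb^2 * Lf n) - 1" using L0 by simp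
        have "(exp (Cb^2 * Lf n) - 1) / card (J n) \<le> exp (Lf n / 4) / card (J n)"
          using e cpos by (simp add: divide_right_mono)
        also have "\<dots> \<le> exp (Lf n / 4) / (\<kappa> * log 2 (Nf n) - 1)"
          using cnt' elim by (intro divide_left_mono) auto
        finally show ?thesis unfolding h_def .
      qed
      then have "g n \<le> sqrt (h n)" unfolding g_def by (rule real_sqrt_le_mono)
      then show ?case using fl by simp
    qed
    have h0: "(h \<longlongrightarrow> 0) sequentially"
      unfolding h_def Lf_def Nf_def by (rule AS3[OF \<kappa>0])
    have g0: "(g \<longlongrightarrow> 0) sequentially"
    proof (rule tendsto_sandwich[of "\<lambda>_. 0" g sequentially "\<lambda>n. sqrt (h n)"])
      show "eventually (\<lambda>n. 0 \<le> g n) sequentially"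
        using evL
      proof eventually_elim
        case (elim n) then show ?case unfolding g_def by simp
      qed
      show "eventually (\<lambda>n. g n \<le> sqrt (h n)) sequentially" using good by eventually_elim auto
      show "((\<lambda>n. sqrt (h n)) \<longlongrightarrow> 0) sequentially" using tendsto_real_sqrt[OF h0] by simp
    qed simp
    have upper: "f n \<le> 1" for n
    proof -
      define T0 where "T0 = (\<lambda>x::nat \<Rightarrow> 'a. 0::real)"
      have T0: "T0 \<in> tests P0 n" unfolding tests_def T0_def by auto
      have supb: "0 \<le> (SUP \<theta>\<in>{\<theta>1..\<theta>2}. type2 P0 lam \<phi> n T (\<Delta> n \<theta>) \<theta> Mc) \<and>
                  (SUP \<theta>\<in>{\<theta>1..\<theta>2}. type2 P0 lam \<phi> n T (\<Delta> n \<theta>) \<theta> Mc) \<le> 1" if T: "T \<in> tests P0 n" for T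
      proof
        have bdd: "bdd_above ((\<lambda>\<theta>. type2 P0 lam \<phi> n T (\<Delta> n \<theta>) \<theta> Mc) ` {\<theta>1..\<theta>2})"
          using type2_le1(1)[OF T] by (intro bdd_aboveI[where M=1]) auto
        have "0 \<le> type2 P0 lam \<phi> n T (\<Delta> n \<theta>1) \<theta>1 Mc" by (rule type2_le1(2)[OF T])
        also have "\<dots> \<le> (SUP \<theta>\<in>{\<theta>1..\<theta>2}. type2 P0 lam \<phi> n T (\<Delta> n \<theta>) \<theta> Mc)"
          using bdd th by (intro cSUP_upper) auto
        finally show "0 \<le> (SUP \<theta>\<in>{\<theta>1..\<theta>2}. type2 P0 lam \<phi> n T (\<Delta> n \<theta>) \<theta> Mc)" .
        show "(SUP \<theta>\<in>{\<theta>1..\<theta>2}. type2 P0 lam \<phi> n T (\<Delta> n \<theta>) \<theta> Mc) \<le> 1"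
          using th type2_le1(1)[OF T] by (intro cSUP_least) auto
      qed
      have bddb: "bdd_below ((\<lambda>T. (\<integral>x. T x \<partial>(PiM {..<n} (\<lambda>_. P0)))
          + (SUP \<theta>\<in>{\<theta>1..\<theta>2}. type2 P0 lam \<phi> n T (\<Delta> n \<theta>) \<theta> Mc)) ` tests P0 n)"
      proof (rule bdd_belowI[where m=0])
        fix y assume "y \<in> (\<lambda>T. (\<integral>x. T x \<partial>(PiM {..<n} (\<lambda>_. P0)))
          + (SUP \<theta>\<in>{\<theta>1..\<theta>2}. type2 P0 lam \<phi> n T (\<Delta> n \<theta>) \<theta> Mc)) ` tests P0 n"
        then obtain T where T: "T \<in> tests P0 n" and y: "y = (\<integral>x. T x \<partial>(PiM {..<n} (\<lambda>_. P0)))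
          + (SUP \<theta>\<in>{\<theta>1..\<theta>2}. type2 P0 lam \<phi> n T (\<Delta> n \<theta>) \<theta> Mc)" by blast
        have "0 \<le> (\<integral>x. T x \<partial>(PiM {..<n} (\<lambda>_. P0)))"
          using T unfolding tests_def by (intro integral_nonneg_AE AE_I2) auto
        then show "0 \<le> y" unfolding y using supb[OF T] by linarith
      qed
      have "f n \<le> (\<integral>x. T0 x \<partial>(PiM {..<n} (\<lambda>_. P0)))
          + (SUP \<theta>\<in>{\<theta>1..\<theta>2}. type2 P0 lam \<phi> n T0 (\<Delta> n \<theta>) \<theta> Mc)"
        unfolding f_def using bddb T0 by (rule cINF_lower)
      also have "\<dots> \<le> 1" using supb[OF T0] by (simp add: T0_def)
      finally show ?thesis .
    qed
    have "(f \<longlongrightarrow> 1) sequentially"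
    proof (rule tendsto_sandwich[of "\<lambda>n. 1 - g n" f sequentially "\<lambda>_. 1"])
      show "eventually (\<lambda>n. 1 - g n \<le> f n) sequentially" using good by eventually_elim auto
      show "eventually (\<lambda>n. f n \<le> 1) sequentially" using upper by simp
      show "((\<lambda>n. 1 - g n) \<longlongrightarrow> 1) sequentially" using tendsto_diff[OF tendsto_const g0, of 1] by simp
    qed simp
    then show "(\<lambda>n. INF T\<in>tests P0 n. (\<integral>x. T x \<partial>(PiM {..<n} (\<lambda>_. P0)))
          + (SUP \<theta>\<in>{\<theta>1..\<theta>2}. type2 P0 lam \<phi> n T (\<Delta> n \<theta>) \<theta> Mc)) \<longlonglongrightarrow> 1"
      unfolding f_def .
  qed
qed


end
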